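(* Let $(C,S)$ be a partially shaded tree, where $C$ is the support tree of a vertex of a non-degenerate transportation polytope $\mathrm{TP}(u,v)$, and assume: (1) (UNO) holds in $(C,S)$; (2) no shaded $+$edge is incident to an open supply node; (3) a supply node $\sigma$ satisfies (SIN) in $(C,S)$. Choose an edge $e$ incident to $\sigma$ as follows: if there is a $-$edge of $F$ incident to $\sigma$ that is not yet shaded (i.e. not in $S$), let $e$ be one such edge; otherwise let $e$ be the unique $+$edge of $F$ incident to $\sigma$. Then (inserting and) shading $e$ in $(C,S)$ to produce the succeeding tree $\hat C$ does not delete any shaded edge.
   Context: Let $N_1,N_2\ge1$, $u\in\mathbb{R}_{>0}^{N_1}$, $v\in\mathbb{R}_{>0}^{N_2}$ with $\sum_iu_i=\sum_jv_j$, and $\mathrm{TP}(u,v)=\{y\in\mathbb{R}^{N_1\times N_2}: \sum_j y_{ij}=u_i\ \forall i,\ \sum_i y_{ij}=v_j\ \forall j,\ y\ge 0\}$. Supply nodes $\sigma^1,\dots,\sigma^{N_1}$ and demand nodes $\delta^1,\dots,\delta^{N_2}$ form $K_{N_1,N_2}$; the support graph of $y$ consists of edges $\{\sigma^i,\delta^j\}$ with $y_{ij}>0$. $\mathrm{TP}(u,v)$ is non-degenerate if there are no nonempty proper $I\subsetneq\{1,\dots,N_1\}$, $J\subsetneq\{1,\dots,N_2\}$ with $\sum_{i\in I}u_i=\sum_{j\in J}v_j$; then each vertex's support graph is a spanning tree of $K_{N_1,N_2}$ determining the vertex (called a tree). Pivot: for a tree $C$ and an edge $e\notin C$, $C\cup\{e\}$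 contains a unique cycle; alternately increasing (starting at $e$) and decreasing flow along it by the largest feasible amount yields an adjacent vertex whose tree is $C\cup\{e\}$ minus exactly one edge of the cycle (the deleted edge, determined by the margins). Fix a tree $F$ and a demand node $\delta^*$; label edges of $F$ alternately $+,-,+,\dots$ along paths in $F$ starting at $\delta^*$, beginning with $+$ (each supply node is incident in $F$ to exactly one $+$edge; each demand node other than $\delta^*$ to exactly one $-$edge). A partially shaded tree is $(C,S)$ with $C$ a tree and $S\subseteq C\cap F$ the shaded edges (others unshaded); shaded edges carry their $F$-labels. (Inserting and) shading an edge $e\in F\setminus S$: if $e\in C$, set $\hat C=C$ and shade $e$; if $e\notin C$, let $\hat C$ be the tree obtained by pivoting $e$ into $C$ and shade $e$; the new shaded set is $S\cup\{e\}$ (minus the deleted edge if it was shaded). A supply node is well-connected if all edges of $F$ incident to it are in $S$, otherwise open; a demand node is well-connected if it is incident to no unshaded edge of $C$, otherwise open. A well-connected edge is a shaded edge incident to a well-connected node. Well-connected components: connected components of the graph on all nodes with the well-connected edges as edges. (UNO) holds in $(C,S)$ if every well-connected component contains exactly one open node. For a supply node $\sigma$, number the edges of $C$ along paths starting at $\sigma$ (edges at $\sigma$ get $1$); an edge is odd w.r.t. $\sigma$ if its number is odd. $\sigma$ satisfies (SIN) if every odd edge w.r.t. $\sigma$ is unshaded or a shaded $-$edge incident to a well-connected demand node. *)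

theory Defs
  imports Complex_Main
begin

text \<open>Matrices y in R^{N1 x N2} are functions nat => nat => real that vanish outside
  the index range {..<N1} x {..<N2} (indices are 0-based).\<close>

definition TP :: "nat \<Rightarrow> nat \<Rightarrow> (nat \<Rightarrow> real) \<Rightarrow> (nat \<Rightarrow> real) \<Rightarrow> (nat \<Rightarrow> nat \<Rightarrow> real) set" where
  "TP N1 N2 u v = {y. (\<forall>i j. (i \<ge> N1 \<or> j \<ge> N2) \<longrightarrow> y i j = 0)
      \<and> (\<forall>i<N1. (\<Sum>j<N2. y i j) = u i)
      \<and> (\<forall>j<N2. (\<Sum>i<N1. y i j) = v j)
      \<and> (\<forall>i j. 0 \<le> y i j)}"

definition nondegenerate :: "nat \<Rightarrow> nat \<Rightarrow> (nat \<Rightarrow> real) \<Rightarrow> (nat \<Rightarrow> real) \<Rightarrow> bool" where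
  "nondegenerate N1 N2 u v \<longleftrightarrow>
     \<not> (\<exists>I J. I \<noteq> {} \<and> I \<subset> {..<N1} \<and> J \<noteq> {} \<and> J \<subset> {..<N2} \<and> sum u I = sum v J)"

definition is_vertex :: "nat \<Rightarrow> nat \<Rightarrow> (nat \<Rightarrow> real) \<Rightarrow> (nat \<Rightarrow> real) \<Rightarrow> (nat \<Rightarrow> nat \<Rightarrow> real) \<Rightarrow> bool" where
  "is_vertex N1 N2 u v y \<longleftrightarrow> y \<in> TP N1 N2 u v \<and>
     (\<forall>a\<in>TP N1 N2 u v. \<forall>b\<in>TP N1 N2 u v. \<forall>t::real. 0 < t \<and> t < 1 \<and>
        y = (\<lambda>i j. t * a i j + (1 - t) * b i j) \<longrightarrow> a = y \<and> b = y)"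

text \<open>Support graph: edge (i,j) stands for {sigma^i, delta^j}.\<close>
definition supp :: "nat \<Rightarrow> nat \<Rightarrow> (nat \<Rightarrow> nat \<Rightarrow> real) \<Rightarrow> (nat \<times> nat) set" where
  "supp N1 N2 y = {(i,j). i < N1 \<and> j < N2 \<and> 0 < y i j}"

text \<open>Pivot: the flow change along the unique cycle of C + e, alternately +1/-1 starting
  with +1 at e, is the unique circulation (zero row and column sums) supported on C + e
  with value 1 at e.\<close>
definition pivot_dir :: "nat \<Rightarrow> nat \<Rightarrow> (nat \<Rightarrow> nat \<Rightarrow> real) \<Rightarrow> nat \<times> nat \<Rightarrow> (nat \<Rightarrow> nat \<Rightarrow> real)" where
  "pivot_dir N1 N2 y e = (THE d. d (fst e) (snd e) = 1
      \<and> (\<forall>i j. d i j \<noteq> 0 \<longrightarrow> (i,j) \<in> supp N1 N2 y \<union> {e})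
      \<and> (\<forall>i<N1. (\<Sum>j<N2. d i j) = 0)
      \<and> (\<forall>j<N2. (\<Sum>i<N1. d i j) = 0))"

definition pivot_step :: "nat \<Rightarrow> nat \<Rightarrow> (nat \<Rightarrow> nat \<Rightarrow> real) \<Rightarrow> nat \<times> nat \<Rightarrow> real" where
  "pivot_step N1 N2 y e = Sup {t::real. 0 \<le> t \<and>
      (\<forall>i j. 0 \<le> y i j + t * pivot_dir N1 N2 y e i j)}"

definition pivot :: "nat \<Rightarrow> nat \<Rightarrow> (nat \<Rightarrow> nat \<Rightarrow> real) \<Rightarrow> nat \<times> nat \<Rightarrow> (nat \<Rightarrow> nat \<Rightarrow> real)" where
  "pivot N1 N2 y e = (\<lambda>i j. y i j + pivot_step N1 N2 y e * pivot_dir N1 N2 y e i j)"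

definition succ_tree :: "nat \<Rightarrow> nat \<Rightarrow> (nat \<Rightarrow> nat \<Rightarrow> real) \<Rightarrow> nat \<times> nat \<Rightarrow> (nat \<times> nat) set" where
  "succ_tree N1 N2 y e = (if e \<in> supp N1 N2 y then supp N1 N2 y else supp N1 N2 (pivot N1 N2 y e))"

datatype node = Sup nat | Dem nat

definition valid_node :: "nat \<Rightarrow> nat \<Rightarrow> node \<Rightarrow> bool" where
  "valid_node N1 N2 x = (case x of Sup i \<Rightarrow> i < N1 | Dem j \<Rightarrow> j < N2)"

definition adj :: "(nat \<times> nat) set \<Rightarrow> node \<Rightarrow> node \<Rightarrow> bool" where
  "adj E a b \<longleftrightarrow> (\<exists>i j. (i,j) \<in> E \<and> ((a = Sup i \<and> b = Dem j) \<or> (a = Dem j \<and> b = Sup i)))"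

fun walk :: "(nat \<times> nat) set \<Rightarrow> node list \<Rightarrow> bool" where
  "walk E [] = False"
| "walk E [x] = True"
| "walk E (x # y # xs) = (adj E x y \<and> walk E (y # xs))"

definition connected_in :: "(nat \<times> nat) set \<Rightarrow> node \<Rightarrow> node \<Rightarrow> bool" where
  "connected_in E a b \<longleftrightarrow> (\<exists>xs. walk E xs \<and> hd xs = a \<and> last xs = b)"

definition dist :: "(nat \<times> nat) set \<Rightarrow> node \<Rightarrow> node \<Rightarrow> nat" where
  "dist E a b = (LEAST n. \<exists>xs. walk E xs \<and> hd xs = a \<and> last xs = b \<and> length xs = Suc n)"

text \<open>Number of edge e=(i,j) of a tree E along paths starting at node x (edges at x get 1):
  the distance from x to the farther endpoint of e.\<close>
definition edge_num :: "(nat \<times> nat) set \<Rightarrow> node \<Rightarrow> nat \<times> nat \<Rightarrow> nat" where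
  "edge_num E x e = max (dist E x (Sup (fst e))) (dist E x (Dem (snd e)))"

definition plus_edge :: "(nat \<times> nat) set \<Rightarrow> nat \<Rightarrow> nat \<times> nat \<Rightarrow> bool" where
  "plus_edge F ds e \<longleftrightarrow> e \<in> F \<and> odd (edge_num F (Dem ds) e)"

definition minus_edge :: "(nat \<times> nat) set \<Rightarrow> nat \<Rightarrow> nat \<times> nat \<Rightarrow> bool" where
  "minus_edge F ds e \<longleftrightarrow> e \<in> F \<and> even (edge_num F (Dem ds) e)"

definition wc_sup :: "(nat \<times> nat) set \<Rightarrow> (nat \<times> nat) set \<Rightarrow> nat \<Rightarrow> bool" where
  "wc_sup F S i \<longleftrightarrow> (\<forall>j. (i,j) \<in> F \<longrightarrow> (i,j) \<in> S)"

definition wc_dem :: "(nat \<times> nat) set \<Rightarrow> (nat \<times> nat) set \<Rightarrow> nat \<Rightarrow> bool" where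
  "wc_dem C S j \<longleftrightarrow> (\<forall>i. (i,j) \<in> C \<longrightarrow> (i,j) \<in> S)"

definition wc_node :: "(nat \<times> nat) set \<Rightarrow> (nat \<times> nat) set \<Rightarrow> (nat \<times> nat) set \<Rightarrow> node \<Rightarrow> bool" where
  "wc_node F C S x = (case x of Sup i \<Rightarrow> wc_sup F S i | Dem j \<Rightarrow> wc_dem C S j)"

definition open_node :: "nat \<Rightarrow> nat \<Rightarrow> (nat \<times> nat) set \<Rightarrow> (nat \<times> nat) set \<Rightarrow> (nat \<times> nat) set \<Rightarrow> node \<Rightarrow> bool" where
  "open_node N1 N2 F C S x \<longleftrightarrow> valid_node N1 N2 x \<and> \<not> wc_node F C S x"

definition wc_edges :: "(nat \<times> nat) set \<Rightarrow> (nat \<times> nat) set \<Rightarrow> (nat \<times> nat) set \<Rightarrow> (nat \<times> nat) set" where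
  "wc_edges F C S = {(i,j). (i,j) \<in> S \<and> (wc_node F C S (Sup i) \<or> wc_node F C S (Dem j))}"

text \<open>(UNO): every well-connected component (connected component of the graph on all
  nodes with the well-connected edges) contains exactly one open node.\<close>
definition UNO :: "nat \<Rightarrow> nat \<Rightarrow> (nat \<times> nat) set \<Rightarrow> (nat \<times> nat) set \<Rightarrow> (nat \<times> nat) set \<Rightarrow> bool" where
  "UNO N1 N2 F C S \<longleftrightarrow> (\<forall>x. valid_node N1 N2 x \<longrightarrow>
     card {z. valid_node N1 N2 z \<and> open_node N1 N2 F C S z \<and> connected_in (wc_edges F C S) x z} = 1)"

definition SIN :: "(nat \<times> nat) set \<Rightarrow> nat \<Rightarrow> (nat \<times> nat) set \<Rightarrow> (nat \<times> nat) set \<Rightarrow> nat \<Rightarrow> bool" where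
  "SIN F ds C S s \<longleftrightarrow> (\<forall>e\<in>C. odd (edge_num C (Sup s) e) \<longrightarrow>
      e \<notin> S \<or> (minus_edge F ds e \<and> wc_dem C S (snd e)))"

end

theory Submission
  imports Defs
begin

fun isS :: "node \<Rightarrow> bool" where
  "isS (Sup i) = True" | "isS (Dem j) = False"

lemma adj_sym: "adj E a b \<Longrightarrow> adj E b a"
  unfolding adj_def by blast

lemma adj_mono: "adj E a b \<Longrightarrow> E \<subseteq> E' \<Longrightarrow> adj E' a b"
  unfolding adj_def by blast

lemma adj_isS: "adj E a b \<Longrightarrow> isS a \<noteq> isS b"
  unfolding adj_def by auto

lemma walk_Cons: "walk E (x # xs) \<longleftrightarrow> (xs = [] \<or> (adj E x (hd xs) \<and> walk E xs))"
  by (cases xs) auto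

lemma walk_iff: "walk E xs \<longleftrightarrow> xs \<noteq> [] \<and> (\<forall>k. Suc k < length xs \<longrightarrow> adj E (xs!k) (xs!Suc k))"
proof (induction xs)
  case Nil then show ?case by simp
next
  case (Cons x xs)
  show ?case
  proof (cases xs)
    case Nil then show ?thesis by simp
  next
    case (Cons y ys)
    have "walk E (x # xs) \<longleftrightarrow> adj E x y \<and> walk E xs" using Cons by simp
    also have "\<dots> \<longleftrightarrow> (\<forall>k. Suc k < length (x#xs) \<longrightarrow> adj E ((x#xs)!k) ((x#xs)!Suc k))"
      unfolding Cons.IH using Cons
      by (auto simp: less_Suc_eq_0_disj nth_Cons split: nat.splits)
    finally show ?thesis by simp
  qed
qed

lemma walk_nth: "walk E xs \<Longrightarrow> Suc k < length xs \<Longrightarrow> adj E (xs!k) (xs!Suc k)"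
  using walk_iff by blast

lemma walk_ne: "walk E xs \<Longrightarrow> xs \<noteq> []"
  using walk_iff by blast

lemma walk_mono: "walk E xs \<Longrightarrow> E \<subseteq> E' \<Longrightarrow> walk E' xs"
  unfolding walk_iff using adj_mono by blast

lemma walk_append: "walk E xs \<Longrightarrow> walk E ys \<Longrightarrow> adj E (last xs) (hd ys) \<Longrightarrow> walk E (xs @ ys)"
proof (induction xs rule: walk.induct)
  case (1 E) then show ?case by simp
next
  case (2 E x) then show ?case using walk_ne[of E ys] by (cases ys) auto
next
  case (3 E x y xs) then show ?case by simp
qed

lemma walk_snoc: "walk E xs \<Longrightarrow> adj E (last xs) w \<Longrightarrow> walk E (xs @ [w])"
  by (rule walk_append) auto

lemma walk_take: "walk E xs \<Longrightarrow> 0 < k \<Longrightarrow> walk E (take k xs)"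
  unfolding walk_iff by (auto simp: nth_take)

lemma walk_drop: "walk E xs \<Longrightarrow> k < length xs \<Longrightarrow> walk E (drop k xs)"
  unfolding walk_iff by auto

lemma walk_rev: "walk E xs \<Longrightarrow> walk E (rev xs)"
  unfolding walk_iff
proof (intro conjI allI impI)
  assume a: "xs \<noteq> [] \<and> (\<forall>k. Suc k < length xs \<longrightarrow> adj E (xs ! k) (xs ! Suc k))"
  then show "rev xs \<noteq> []" by simp
  fix k assume k: "Suc k < length (rev xs)"
  have "adj E (xs ! (length xs - Suc (Suc k))) (xs ! Suc (length xs - Suc (Suc k)))"
    using a k by auto
  moreover have "Suc (length xs - Suc (Suc k)) = length xs - Suc k" using k by simp
  ultimately show "adj E (rev xs ! k) (rev xs ! Suc k)"
    using k by (auto simp: rev_nth intro: adj_sym)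
qed

lemma walk_join: "walk E xs \<Longrightarrow> walk E ys \<Longrightarrow> last xs = hd ys \<Longrightarrow> walk E (xs @ tl ys)"
proof -
  assume a: "walk E xs" "walk E ys" "last xs = hd ys"
  show ?thesis
  proof (cases "tl ys")
    case Nil then show ?thesis using a by simp
  next
    case (Cons z zs)
    have ys: "ys = hd ys # z # zs" using Cons walk_ne[OF a(2)] by (cases ys) auto
    have w: "walk E (hd ys # z # zs)" using a(2) ys by metis
    then have "walk E (tl ys)" "adj E (hd ys) z" using Cons by auto
    then show ?thesis using a Cons by (intro walk_append) auto
  qed
qed

lemma walk_isS: "walk E xs \<Longrightarrow> k < length xs \<Longrightarrow> (isS (xs!k) = isS (xs!0)) \<longleftrightarrow> even k"
proof (induction k)
  case 0 then show ?case by simp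
next
  case (Suc k)
  have "isS (xs!Suc k) \<noteq> isS (xs!k)" using walk_nth[OF Suc.prems(1)] Suc.prems(2) adj_isS adj_sym by blast
  then show ?case using Suc by auto
qed

lemma walk_isS_last: "walk E xs \<Longrightarrow> (isS (last xs) = isS (hd xs)) \<longleftrightarrow> odd (length xs)"
proof -
  assume w: "walk E xs"
  have ne: "xs \<noteq> []" using walk_ne[OF w] .
  have "(isS (xs!(length xs - 1)) = isS (xs!0)) \<longleftrightarrow> even (length xs - 1)"
    using walk_isS[OF w] ne by simp
  moreover have "last xs = xs!(length xs - 1)" using ne by (simp add: last_conv_nth)
  moreover have "hd xs = xs!0" using ne by (simp add: hd_conv_nth)
  moreover have "even (length xs - 1) \<longleftrightarrow> odd (length xs)" using ne by (cases "length xs") auto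
  ultimately show ?thesis by simp
qed

lemma conn_refl: "connected_in E a a"
  unfolding connected_in_def by (intro exI[of _ "[a]"]) simp

lemma conn_sym: "connected_in E a b \<Longrightarrow> connected_in E b a"
  unfolding connected_in_def
  by (metis walk_rev walk_ne hd_rev last_rev)

lemma conn_trans: "connected_in E a b \<Longrightarrow> connected_in E b c \<Longrightarrow> connected_in E a c"
  unfolding connected_in_def
proof (elim exE conjE)
  fix xs ys assume a: "walk E xs" "hd xs = a" "last xs = b" "walk E ys" "hd ys = b" "last ys = c"
  show "\<exists>zs. walk E zs \<and> hd zs = a \<and> last zs = c"
  proof (intro exI conjI)
    show "walk E (xs @ tl ys)" using a walk_join by metis
    show "hd (xs @ tl ys) = a" using a walk_ne by auto
    show "last (xs @ tl ys) = c" using a walk_ne[OF a(4)]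
      by (cases ys) (auto)
  qed
qed

lemma conn_adj: "adj E a b \<Longrightarrow> connected_in E a b"
  unfolding connected_in_def by (intro exI[of _ "[a,b]"]) simp

lemma conn_mono: "connected_in E a b \<Longrightarrow> E \<subseteq> E' \<Longrightarrow> connected_in E' a b"
  unfolding connected_in_def using walk_mono by blast

lemma dist_ex: "connected_in E a b \<Longrightarrow>
  \<exists>xs. walk E xs \<and> hd xs = a \<and> last xs = b \<and> length xs = Suc (dist E a b)"
proof -
  assume "connected_in E a b"
  then obtain xs where xs: "walk E xs" "hd xs = a" "last xs = b" unfolding connected_in_def by blast
  then have "\<exists>n. \<exists>xs. walk E xs \<and> hd xs = a \<and> last xs = b \<and> length xs = Suc n"
    using walk_ne[OF xs(1)] by (intro exI[of _ "length xs - 1"] exI[of _ xs]) auto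
  then show ?thesis unfolding dist_def by (rule LeastI_ex)
qed

lemma dist_le: "walk E xs \<Longrightarrow> hd xs = a \<Longrightarrow> last xs = b \<Longrightarrow> dist E a b \<le> length xs - 1"
  unfolding dist_def
  by (rule Least_le) (use walk_ne in auto)

lemma dist_self: "dist E a a = 0"
  using dist_le[of E "[a]" a a] by simp

lemma dist_parity: "connected_in E a b \<Longrightarrow> (isS a = isS b) \<longleftrightarrow> even (dist E a b)"
  using dist_ex walk_isS_last by fastforce

lemma dist_adj: "connected_in E r x \<Longrightarrow> adj E x w \<Longrightarrow> dist E r w \<le> dist E r x + 1"
proof -
  assume c: "connected_in E r x" and a: "adj E x w"
  obtain xs where xs: "walk E xs" "hd xs = r" "last xs = x" "length xs = Suc (dist E r x)"
    using dist_ex[OF c] by blast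
  have "walk E (xs @ [w])" using walk_snoc xs a by metis
  then have "dist E r w \<le> length (xs @ [w]) - 1" using xs walk_ne[OF xs(1)] by (intro dist_le) auto
  then show ?thesis using xs by simp
qed

lemma dist_adj2: "connected_in E r x \<Longrightarrow> adj E x w \<Longrightarrow>
   dist E r w = dist E r x + 1 \<or> dist E r x = dist E r w + 1"
proof -
  assume c: "connected_in E r x" and a: "adj E x w"
  have c2: "connected_in E r w" using conn_trans[OF c conn_adj[OF a]] .
  have "dist E r w \<le> dist E r x + 1" using dist_adj[OF c a] .
  moreover have "dist E r x \<le> dist E r w + 1" using dist_adj[OF c2 adj_sym[OF a]] .
  moreover have "even (dist E r x) \<noteq> even (dist E r w)"
    using dist_parity[OF c] dist_parity[OF c2] adj_isS[OF a] by auto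
  ultimately show ?thesis by presburger
qed


definition inrange :: "nat \<Rightarrow> nat \<Rightarrow> (nat \<times> nat) set \<Rightarrow> bool" where
  "inrange N1 N2 E \<longleftrightarrow> (\<forall>i j. (i,j) \<in> E \<longrightarrow> i < N1 \<and> j < N2)"

definition tree :: "nat \<Rightarrow> nat \<Rightarrow> (nat \<times> nat) set \<Rightarrow> bool" where
  "tree N1 N2 T \<longleftrightarrow> inrange N1 N2 T
     \<and> (\<forall>a b. valid_node N1 N2 a \<longrightarrow> valid_node N1 N2 b \<longrightarrow> connected_in T a b)
     \<and> (\<forall>i j. (i,j) \<in> T \<longrightarrow> \<not> connected_in (T - {(i,j)}) (Sup i) (Dem j))"

lemma adj_valid: "inrange N1 N2 E \<Longrightarrow> adj E a b \<Longrightarrow> valid_node N1 N2 a \<and> valid_node N1 N2 b"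
  unfolding inrange_def adj_def valid_node_def by auto

lemma walk_avoid: "walk E xs \<Longrightarrow> (Sup i \<notin> set xs \<or> Dem j \<notin> set xs) \<Longrightarrow> walk (E - {(i,j)}) xs"
  unfolding walk_iff
proof (intro conjI allI impI)
  assume a: "xs \<noteq> [] \<and> (\<forall>k. Suc k < length xs \<longrightarrow> adj E (xs ! k) (xs ! Suc k))"
    and b: "Sup i \<notin> set xs \<or> Dem j \<notin> set xs"
  then show "xs \<noteq> []" by simp
  fix k assume k: "Suc k < length xs"
  have m: "xs!k \<in> set xs" "xs!Suc k \<in> set xs" using k by auto
  show "adj (E - {(i, j)}) (xs ! k) (xs ! Suc k)"
    using a k b m unfolding adj_def by fastforce
qed

lemma adj_remove: "adj E a b \<Longrightarrow> \<not> ((a = Sup i \<and> b = Dem j) \<or> (a = Dem j \<and> b = Sup i)) \<Longrightarrow> adj (E - {(i,j)}) a b"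
  unfolding adj_def by blast

lemma tree_sep: "tree N1 N2 T \<Longrightarrow> (i,j) \<in> T \<Longrightarrow> connected_in (T - {(i,j)}) a b \<Longrightarrow>
   (a = Sup i \<and> b = Dem j) \<or> (a = Dem j \<and> b = Sup i) \<Longrightarrow> False"
  unfolding tree_def using conn_sym by blast

lemma tree_conn: "tree N1 N2 T \<Longrightarrow> valid_node N1 N2 a \<Longrightarrow> valid_node N1 N2 b \<Longrightarrow> connected_in T a b"
  unfolding tree_def by blast

lemma tree_inrange: "tree N1 N2 T \<Longrightarrow> inrange N1 N2 T"
  unfolding tree_def by blast

lemma walk_nodes_dist: "walk E xs \<Longrightarrow> hd xs = r \<Longrightarrow> x \<in> set xs \<Longrightarrow> dist E r x \<le> length xs - 1"
proof -
  assume w: "walk E xs" and h: "hd xs = r" and x: "x \<in> set xs"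
  obtain k where k: "k < length xs" "xs!k = x" using x by (metis in_set_conv_nth)
  have "walk E (take (Suc k) xs)" using walk_take[OF w] by simp
  moreover have "hd (take (Suc k) xs) = r" using h k by (cases xs) auto
  moreover have "last (take (Suc k) xs) = x" using k by (simp add: take_Suc_conv_app_nth)
  ultimately have "dist E r x \<le> length (take (Suc k) xs) - 1" by (rule dist_le)
  then show ?thesis using k by simp
qed

lemma parent_unique:
  assumes T: "tree N1 N2 T" and r: "valid_node N1 N2 r"
    and a1: "adj T x1 w" and a2: "adj T x2 w"
    and d1: "dist T r x1 + 1 = dist T r w" and d2: "dist T r x2 + 1 = dist T r w"
  shows "x1 = x2"
proof (rule ccontr)
  assume ne: "x1 \<noteq> x2"
  have ir: "inrange N1 N2 T" using T tree_inrange by blast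
  have v1: "valid_node N1 N2 x1" "valid_node N1 N2 w" using adj_valid[OF ir a1] by auto
  have v2: "valid_node N1 N2 x2" using adj_valid[OF ir a2] by auto
  obtain W1 where W1: "walk T W1" "hd W1 = r" "last W1 = x1" "length W1 = Suc (dist T r x1)"
    using dist_ex tree_conn[OF T r v1(1)] by blast
  obtain W2 where W2: "walk T W2" "hd W2 = r" "last W2 = x2" "length W2 = Suc (dist T r x2)"
    using dist_ex tree_conn[OF T r v2] by blast
  have nw1: "w \<notin> set W1" using walk_nodes_dist[OF W1(1,2)] W1(4) d1 by fastforce
  have nw2: "w \<notin> set W2" using walk_nodes_dist[OF W2(1,2)] W2(4) d2 by fastforce
  obtain i j where ij: "(i,j) \<in> T" "(x1 = Sup i \<and> w = Dem j) \<or> (x1 = Dem j \<and> w = Sup i)"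
    using a1 unfolding adj_def by blast
  have av: "Sup i \<notin> set W1 \<or> Dem j \<notin> set W1" "Sup i \<notin> set W2 \<or> Dem j \<notin> set W2"
    using ij(2) nw1 nw2 by auto
  have wa1: "walk (T - {(i,j)}) (rev W1)" using walk_rev walk_avoid[OF W1(1) av(1)] by blast
  have wa2: "walk (T - {(i,j)}) W2" using walk_avoid[OF W2(1) av(2)] .
  have c1: "connected_in (T - {(i,j)}) x1 x2"
    unfolding connected_in_def
    apply (rule exI[of _ "rev W1 @ tl W2"])
    using wa1 wa2 W1 W2 walk_ne[OF W1(1)] walk_ne[OF W2(1)] walk_join[OF wa1 wa2]
    by (cases W2) (auto simp: hd_rev last_rev)
  have "adj (T - {(i,j)}) x2 w"
    using adj_remove[OF a2] ij(2) ne by auto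
  then have "connected_in (T - {(i,j)}) x1 w" using conn_trans[OF c1 conn_adj] by blast
  then show False using tree_sep[OF T ij(1)] ij(2) by blast
qed

lemma step_down:
  assumes T: "tree N1 N2 T" and r: "valid_node N1 N2 r"
    and ab: "adj T a b" and bc: "adj T b c" and ne: "a \<noteq> c"
    and d: "dist T r b = dist T r a + 1"
  shows "dist T r c = dist T r b + 1"
proof -
  have ir: "inrange N1 N2 T" using T tree_inrange by blast
  have vb: "valid_node N1 N2 b" using adj_valid[OF ir ab] by auto
  have "dist T r c = dist T r b + 1 \<or> dist T r b = dist T r c + 1"
    using dist_adj2[OF tree_conn[OF T r vb] bc] .
  moreover have "dist T r b = dist T r c + 1 \<Longrightarrow> False"
    using parent_unique[OF T r ab adj_sym[OF bc]] d ne by simp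
  ultimately show ?thesis by blast
qed

lemma step_any:
  assumes T: "tree N1 N2 T" and r: "valid_node N1 N2 r" and ab: "adj T a b"
  shows "dist T r b = dist T r a + 1 \<or> dist T r a = dist T r b + 1"
proof -
  have ir: "inrange N1 N2 T" using T tree_inrange by blast
  have va: "valid_node N1 N2 a" using adj_valid[OF ir ab] by auto
  show ?thesis using dist_adj2[OF tree_conn[OF T r va] ab] .
qed

lemma nobt:
  assumes w: "walk E xs" and h: "hd xs = a" and l: "last xs = b"
    and len: "length xs = Suc (dist E a b)" and k: "Suc (Suc k) < length xs"
  shows "xs!k \<noteq> xs!Suc (Suc k)"
proof
  assume eq: "xs!k = xs!Suc (Suc k)"
  define ys where "ys = take (Suc k) xs @ drop (Suc (Suc (Suc k))) xs"
  have wt: "walk E (take (Suc k) xs)" using walk_take[OF w] by simp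
  have lt: "last (take (Suc k) xs) = xs!k" using k by (simp add: take_Suc_conv_app_nth)
  have ht: "hd (take (Suc k) xs) = a" using h k by (cases xs) auto
  have wy: "walk E ys \<and> hd ys = a \<and> last ys = b"
  proof (cases "Suc (Suc (Suc k)) < length xs")
    case True
    have wd: "walk E (drop (Suc (Suc (Suc k))) xs)" using walk_drop[OF w True] .
    have hd: "hd (drop (Suc (Suc (Suc k))) xs) = xs!Suc (Suc (Suc k))" using True by (simp add: hd_drop_conv_nth)
    have "adj E (xs!Suc (Suc k)) (xs!Suc (Suc (Suc k)))" using walk_nth[OF w True] .
    then have "walk E ys" unfolding ys_def using wt wd lt hd eq by (intro walk_append) auto
    moreover have "last ys = b" unfolding ys_def using True l by (simp add: last_drop)
    moreover have "take (Suc k) xs \<noteq> []" using k by auto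
    ultimately show ?thesis using ht unfolding ys_def by (simp add: hd_append)
  next
    case False
    then have "length xs = Suc (Suc (Suc k))" using k by simp
    then have "last xs = xs!Suc (Suc k)" using last_conv_nth[of xs] by (metis Zero_not_Suc diff_Suc_1 list.size(3))
    then show ?thesis unfolding ys_def using wt lt ht eq l False by simp
  qed
  have "dist E a b \<le> length ys - 1" using dist_le wy by blast
  moreover have "length ys = length xs - 2" unfolding ys_def using k by simp
  ultimately show False using len k by simp
qed

lemma first_exit: "walk E xs \<Longrightarrow> hd xs \<in> A \<Longrightarrow> last xs \<notin> A \<Longrightarrow>
   \<exists>k. Suc k < length xs \<and> xs!k \<in> A \<and> xs!Suc k \<notin> A"
proof (induction xs rule: walk.induct)
  case (1 E) then show ?case by simp
next
  case (2 E x) then show ?case by simp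
next
  case (3 E x y xs)
  show ?case
  proof (cases "y \<in> A")
    case True
    then obtain k where "Suc k < length (y#xs)" "(y#xs)!k \<in> A" "(y#xs)!Suc k \<notin> A"
      using 3 by auto
    then show ?thesis by (intro exI[of _ "Suc k"]) auto
  next
    case False then show ?thesis using 3 by (intro exI[of _ 0]) auto
  qed
qed


section \<open>Flows\<close>

lemma cut_identity:
  fixes w :: "nat \<Rightarrow> nat \<Rightarrow> real" and u v :: "nat \<Rightarrow> real"
  assumes rows: "\<forall>i<N1. (\<Sum>j<N2. w i j) = u i" and cols: "\<forall>j<N2. (\<Sum>i<N1. w i j) = v j"
    and I: "I \<subseteq> {..<N1}" and J: "J \<subseteq> {..<N2}"
  shows "sum u I - sum v J = (\<Sum>i\<in>I. \<Sum>j\<in>{..<N2} - J. w i j) - (\<Sum>i\<in>{..<N1} - I. \<Sum>j\<in>J. w i j)"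
proof -
  have fI: "finite I" using I finite_subset by blast
  have fJ: "finite J" using J finite_subset by blast
  have "sum u I = (\<Sum>i\<in>I. \<Sum>j<N2. w i j)" using rows I by (intro sum.cong) auto
  also have "\<dots> = (\<Sum>i\<in>I. (\<Sum>j\<in>J. w i j) + (\<Sum>j\<in>{..<N2} - J. w i j))"
    by (intro sum.cong refl) (metis J add.commute finite_lessThan sum.subset_diff)
  also have "\<dots> = (\<Sum>i\<in>I. \<Sum>j\<in>J. w i j) + (\<Sum>i\<in>I. \<Sum>j\<in>{..<N2} - J. w i j)"
    by (simp add: sum.distrib)
  finally have eu: "sum u I = (\<Sum>i\<in>I. \<Sum>j\<in>J. w i j) + (\<Sum>i\<in>I. \<Sum>j\<in>{..<N2} - J. w i j)" .
  have "sum v J = (\<Sum>j\<in>J. \<Sum>i<N1. w i j)" using cols J by (intro sum.cong) auto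
  also have "\<dots> = (\<Sum>i<N1. \<Sum>j\<in>J. w i j)" by (rule sum.swap)
  also have "\<dots> = (\<Sum>i\<in>I. \<Sum>j\<in>J. w i j) + (\<Sum>i\<in>{..<N1} - I. \<Sum>j\<in>J. w i j)"
    by (metis I add.commute finite_lessThan sum.subset_diff)
  finally have ev: "sum v J = (\<Sum>i\<in>I. \<Sum>j\<in>J. w i j) + (\<Sum>i\<in>{..<N1} - I. \<Sum>j\<in>J. w i j)" .
  show ?thesis using eu ev by simp
qed

lemma TP_iff: "y \<in> TP N1 N2 u v \<longleftrightarrow> (\<forall>i j. (i \<ge> N1 \<or> j \<ge> N2) \<longrightarrow> y i j = 0)
      \<and> (\<forall>i<N1. (\<Sum>j<N2. y i j) = u i)
      \<and> (\<forall>j<N2. (\<Sum>i<N1. y i j) = v j)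
      \<and> (\<forall>i j. 0 \<le> y i j)"
  unfolding TP_def by simp

lemma vertex_no_circ:
  fixes c :: "nat \<Rightarrow> nat \<Rightarrow> real"
  assumes vx: "is_vertex N1 N2 u v y"
    and supp: "\<forall>i j. c i j \<noteq> 0 \<longrightarrow> i < N1 \<and> j < N2 \<and> 0 < y i j"
    and rs: "\<forall>i<N1. (\<Sum>j<N2. c i j) = 0" and cs: "\<forall>j<N2. (\<Sum>i<N1. c i j) = 0"
  shows "c = (\<lambda>i j. 0)"
proof (rule ccontr)
  assume "c \<noteq> (\<lambda>i j. 0)"
  then obtain i0 j0 where c0: "c i0 j0 \<noteq> 0" by (meson ext)
  have yT: "y \<in> TP N1 N2 u v" using vx unfolding is_vertex_def by blast
  note yT' = yT[unfolded TP_iff]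
  define P where "P = {(i,j). i < N1 \<and> j < N2 \<and> c i j \<noteq> 0}"
  have finP: "finite P" unfolding P_def
    by (rule finite_subset[of _ "{..<N1} \<times> {..<N2}"]) auto
  have p0: "(i0,j0) \<in> P" using c0 supp unfolding P_def by auto
  define \<epsilon> where "\<epsilon> = Min ((\<lambda>(i,j). y i j / \<bar>c i j\<bar>) ` P)"
  have epos: "0 < \<epsilon>" unfolding \<epsilon>_def
    using finP p0 supp unfolding P_def by (subst Min_gr_iff) auto
  have ele: "\<epsilon> * \<bar>c i j\<bar> \<le> y i j" for i j
  proof (cases "c i j = 0")
    case True then show ?thesis using yT' by simp
  next
    case False
    then have "(i,j) \<in> P" using supp unfolding P_def by auto
    then have "\<epsilon> \<le> y i j / \<bar>c i j\<bar>" unfolding \<epsilon>_def using finP by (intro Min_le) auto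
    then show ?thesis using False by (simp add: le_divide_eq)
  qed
  define a where "a = (\<lambda>i j. y i j + \<epsilon> * c i j)"
  define b where "b = (\<lambda>i j. y i j - \<epsilon> * c i j)"
  have cz: "c i j = 0" if "i \<ge> N1 \<or> j \<ge> N2" for i j using supp that by force
  have aT: "a \<in> TP N1 N2 u v" unfolding TP_iff a_def
  proof (intro conjI allI impI)
    fix i j
    have h: "\<bar>\<epsilon> * c i j\<bar> \<le> y i j" using ele[of i j] epos by (simp add: abs_mult)
    show "0 \<le> y i j + \<epsilon> * c i j" using h abs_le_iff[of "\<epsilon> * c i j" "y i j"] by linarith
  next
    fix i j assume "N1 \<le> i \<or> N2 \<le> j" then show "y i j + \<epsilon> * c i j = 0" using yT' cz by auto
  next
    fix i assume "i < N1" then show "(\<Sum>j<N2. y i j + \<epsilon> * c i j) = u i"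
      using yT' rs by (simp add: sum.distrib sum_distrib_left[symmetric])
  next
    fix j assume "j < N2" then show "(\<Sum>i<N1. y i j + \<epsilon> * c i j) = v j"
      using yT' cs by (simp add: sum.distrib sum_distrib_left[symmetric])
  qed
  have bT: "b \<in> TP N1 N2 u v" unfolding TP_iff b_def
  proof (intro conjI allI impI)
    fix i j
    have h: "\<bar>\<epsilon> * c i j\<bar> \<le> y i j" using ele[of i j] epos by (simp add: abs_mult)
    show "0 \<le> y i j - \<epsilon> * c i j" using h abs_le_iff[of "\<epsilon> * c i j" "y i j"] by linarith
  next
    fix i j assume "N1 \<le> i \<or> N2 \<le> j" then show "y i j - \<epsilon> * c i j = 0" using yT' cz by auto
  next
    fix i assume "i < N1" then show "(\<Sum>j<N2. y i j - \<epsilon> * c i j) = u i"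
      using yT' rs by (simp add: sum_subtractf sum_distrib_left[symmetric])
  next
    fix j assume "j < N2" then show "(\<Sum>i<N1. y i j - \<epsilon> * c i j) = v j"
      using yT' cs by (simp add: sum_subtractf sum_distrib_left[symmetric])
  qed
  have "y = (\<lambda>i j. (1/2) * a i j + (1 - 1/2) * b i j)" unfolding a_def b_def by (auto simp: algebra_simps)
  moreover have vx2: "\<forall>a\<in>TP N1 N2 u v. \<forall>b\<in>TP N1 N2 u v. \<forall>t::real. 0 < t \<and> t < 1 \<and>
        y = (\<lambda>i j. t * a i j + (1 - t) * b i j) \<longrightarrow> a = y \<and> b = y"
    using vx unfolding is_vertex_def by blast
  ultimately have "a = y" using vx2[rule_format, OF aT bT, of "1/2"] by simp
  then have "\<epsilon> * c i0 j0 = 0" unfolding a_def by (metis add_cancel_left_right)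
  then show False using epos c0 by simp
qed

definition ind :: "node \<Rightarrow> node \<Rightarrow> nat \<Rightarrow> nat \<Rightarrow> real" where
  "ind a b i j = (if (a = Sup i \<and> b = Dem j) \<or> (a = Dem j \<and> b = Sup i) then 1 else 0)"

fun fw :: "node list \<Rightarrow> nat \<Rightarrow> nat \<Rightarrow> real" where
  "fw [] = (\<lambda>i j. 0)"
| "fw [x] = (\<lambda>i j. 0)"
| "fw (x # y # xs) = (\<lambda>i j. ind x y i j - fw (y # xs) i j)"

lemma ind_row: "adj E a b \<Longrightarrow> inrange N1 N2 E \<Longrightarrow> i < N1 \<Longrightarrow>
  (\<Sum>j<N2. ind a b i j) = (if a = Sup i then 1 else 0) + (if b = Sup i then 1 else 0)"
proof -
  assume a: "adj E a b" "inrange N1 N2 E" "i < N1"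
  then obtain i' j' where e: "(i',j') \<in> E" "(a = Sup i' \<and> b = Dem j') \<or> (a = Dem j' \<and> b = Sup i')"
    unfolding adj_def by blast
  have j': "j' < N2" using e a(2) unfolding inrange_def by blast
  have indf: "\<And>i j. ind a b i j = (if i = i' \<and> j = j' then 1 else 0)" using e unfolding ind_def by auto
  have "(\<Sum>j<N2. ind a b i j) = (if i = i' then 1 else 0)" using j' by (cases "i = i'") (simp_all add: indf)
  then show ?thesis using e by auto
qed

lemma ind_col: "adj E a b \<Longrightarrow> inrange N1 N2 E \<Longrightarrow> j < N2 \<Longrightarrow>
  (\<Sum>i<N1. ind a b i j) = (if a = Dem j then 1 else 0) + (if b = Dem j then 1 else 0)"
proof -
  assume a: "adj E a b" "inrange N1 N2 E" "j < N2"
  then obtain i' j' where e: "(i',j') \<in> E" "(a = Sup i' \<and> b = Dem j') \<or> (a = Dem j' \<and> b = Sup i')"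
    unfolding adj_def by blast
  have i': "i' < N1" using e a(2) unfolding inrange_def by blast
  have indf: "\<And>i j. ind a b i j = (if i = i' \<and> j = j' then 1 else 0)" using e unfolding ind_def by auto
  have "(\<Sum>i<N1. ind a b i j) = (if j = j' then 1 else 0)" using i' by (cases "j = j'") (simp_all add: indf)
  then show ?thesis using e by auto
qed

lemma fw_row: "walk E xs \<Longrightarrow> inrange N1 N2 E \<Longrightarrow> i < N1 \<Longrightarrow>
  (\<Sum>j<N2. fw xs i j) = (if hd xs = Sup i then 1 else 0) + (-1) ^ length xs * (if last xs = Sup i then 1 else 0)"
proof (induction xs rule: fw.induct)
  case 1 then show ?case by simp
next
  case (2 x) then show ?case by simp
next
  case (3 x y xs)
  have w: "walk E (y # xs)" "adj E x y" using 3 by auto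
  have "(\<Sum>j<N2. fw (x # y # xs) i j) = (\<Sum>j<N2. ind x y i j) - (\<Sum>j<N2. fw (y # xs) i j)"
    by (simp add: sum_subtractf)
  also have "\<dots> = (if x = Sup i then 1 else 0) + (if y = Sup i then 1 else 0)
      - ((if y = Sup i then 1 else 0) + (-1) ^ length (y # xs) * (if last (y # xs) = Sup i then 1 else 0))"
    using ind_row[OF w(2) 3(3,4)] 3(1)[OF w(1) 3(3,4)] by simp
  finally show ?case by simp
qed

lemma fw_col: "walk E xs \<Longrightarrow> inrange N1 N2 E \<Longrightarrow> j < N2 \<Longrightarrow>
  (\<Sum>i<N1. fw xs i j) = (if hd xs = Dem j then 1 else 0) + (-1) ^ length xs * (if last xs = Dem j then 1 else 0)"
proof (induction xs rule: fw.induct)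
  case 1 then show ?case by simp
next
  case (2 x) then show ?case by simp
next
  case (3 x y xs)
  have w: "walk E (y # xs)" "adj E x y" using 3 by auto
  have "(\<Sum>i<N1. fw (x # y # xs) i j) = (\<Sum>i<N1. ind x y i j) - (\<Sum>i<N1. fw (y # xs) i j)"
    by (simp add: sum_subtractf)
  also have "\<dots> = (if x = Dem j then 1 else 0) + (if y = Dem j then 1 else 0)
      - ((if y = Dem j then 1 else 0) + (-1) ^ length (y # xs) * (if last (y # xs) = Dem j then 1 else 0))"
    using ind_col[OF w(2) 3(3,4)] 3(1)[OF w(1) 3(3,4)] by simp
  finally show ?case by simp
qed

lemma fw_supp: "walk E xs \<Longrightarrow> fw xs i j \<noteq> 0 \<Longrightarrow> (i,j) \<in> E"
proof (induction xs rule: fw.induct)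
  case 1 then show ?case by simp
next
  case (2 x) then show ?case by simp
next
  case (3 x y xs)
  show ?case
  proof (cases "ind x y i j = 0")
    case True then show ?thesis using 3 by auto
  next
    case False
    then have "(x = Sup i \<and> y = Dem j) \<or> (x = Dem j \<and> y = Sup i)" unfolding ind_def by (auto split: if_splits)
    moreover have "adj E x y" using 3 by simp
    ultimately show ?thesis unfolding adj_def by auto
  qed
qed

lemma even_walk_SD: "walk E xs \<Longrightarrow> hd xs = Sup a \<Longrightarrow> last xs = Dem b \<Longrightarrow> even (length xs)"
  using walk_isS_last by fastforce

lemma circ_from_walk:
  assumes w: "walk E xs" and ir: "inrange N1 N2 E"
    and h: "hd xs = Sup s" and l: "last xs = Dem t"
  shows "\<forall>i<N1. (\<Sum>j<N2. ind (Sup s) (Dem t) i j - fw xs i j) = 0"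
    and "\<forall>j<N2. (\<Sum>i<N1. ind (Sup s) (Dem t) i j - fw xs i j) = 0"
proof -
  have ev: "even (length xs)" using even_walk_SD[OF w h l] .
  have "s < N1 \<and> t < N2"
  proof -
    have "length xs \<noteq> 1" using ev by auto
    then have "Suc 0 < length xs" using walk_ne[OF w] by (cases xs) auto
    then have a1: "adj E (xs!0) (xs!1)" using walk_nth[OF w, of 0] by simp
    have "valid_node N1 N2 (xs!0)" using adj_valid[OF ir a1] by simp
    then have s: "s < N1" using h walk_ne[OF w] by (auto simp: hd_conv_nth valid_node_def)
    have "Suc (length xs - 2) < length xs" using \<open>Suc 0 < length xs\<close> by simp
    then have a2: "adj E (xs!(length xs - 2)) (xs!Suc (length xs - 2))" using walk_nth[OF w] by blast
    have "Suc (length xs - 2) = length xs - 1" using \<open>Suc 0 < length xs\<close> by simp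
    then have "valid_node N1 N2 (last xs)" using adj_valid[OF ir a2] walk_ne[OF w] by (simp add: last_conv_nth)
    then show ?thesis using s l by (simp add: valid_node_def)
  qed
  then have ee: "adj {(s,t)} (Sup s) (Dem t)" "inrange N1 N2 {(s,t)}" unfolding adj_def inrange_def by auto
  show "\<forall>i<N1. (\<Sum>j<N2. ind (Sup s) (Dem t) i j - fw xs i j) = 0"
    using ind_row[OF ee] fw_row[OF w ir] h l ev by (auto simp: sum_subtractf)
  show "\<forall>j<N2. (\<Sum>i<N1. ind (Sup s) (Dem t) i j - fw xs i j) = 0"
    using ind_col[OF ee] fw_col[OF w ir] h l ev by (auto simp: sum_subtractf)
qed


lemma inrange_supp: "inrange N1 N2 (supp N1 N2 y)"
  unfolding inrange_def supp_def by auto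

lemma vertex_sep:
  assumes vx: "is_vertex N1 N2 u v y" and g: "(i,j) \<in> supp N1 N2 y"
    and c: "connected_in (supp N1 N2 y - {(i,j)}) (Sup i) (Dem j)"
  shows False
proof -
  define E where "E = supp N1 N2 y - {(i,j)}"
  obtain xs where xs: "walk E xs" "hd xs = Sup i" "last xs = Dem j"
    using c unfolding connected_in_def E_def by blast
  have ir: "inrange N1 N2 E" using inrange_supp unfolding inrange_def E_def by blast
  define c where "c = (\<lambda>a b. ind (Sup i) (Dem j) a b - fw xs a b)"
  have rs: "\<forall>a<N1. (\<Sum>b<N2. c a b) = 0" and cs: "\<forall>b<N2. (\<Sum>a<N1. c a b) = 0"
    using circ_from_walk[OF xs(1) ir xs(2,3)] unfolding c_def by auto
  have sp: "\<forall>a b. c a b \<noteq> 0 \<longrightarrow> a < N1 \<and> b < N2 \<and> 0 < y a b"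
  proof (intro allI impI)
    fix a b assume "c a b \<noteq> 0"
    then have "ind (Sup i) (Dem j) a b \<noteq> 0 \<or> fw xs a b \<noteq> 0" unfolding c_def by auto
    then have "(a,b) \<in> supp N1 N2 y"
    proof
      assume "ind (Sup i) (Dem j) a b \<noteq> 0"
      then have "a = i \<and> b = j" unfolding ind_def by (simp split: if_splits)
      then show ?thesis using g by simp
    next
      assume "fw xs a b \<noteq> 0"
      then show ?thesis using fw_supp[OF xs(1)] unfolding E_def by blast
    qed
    then show "a < N1 \<and> b < N2 \<and> 0 < y a b" unfolding supp_def by auto
  qed
  have "fw xs i j = 0" using fw_supp[OF xs(1), of i j] unfolding E_def by auto
  then have "c i j = 1" unfolding c_def ind_def by simp
  moreover have "c = (\<lambda>a b. 0)" using vertex_no_circ[OF vx sp rs cs] .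
  ultimately show False by simp
qed

lemma vertex_conn:
  assumes yT: "y \<in> TP N1 N2 u v" and up: "\<forall>i<N1. 0 < u i" and vp: "\<forall>j<N2. 0 < v j"
    and tot: "(\<Sum>i<N1. u i) = (\<Sum>j<N2. v j)" and nd: "nondegenerate N1 N2 u v"
    and va: "valid_node N1 N2 a" and vb: "valid_node N1 N2 b"
  shows "connected_in (supp N1 N2 y) a b"
proof (rule ccontr)
  assume nc: "\<not> connected_in (supp N1 N2 y) a b"
  note yT' = yT[unfolded TP_iff]
  define A where "A = {x. connected_in (supp N1 N2 y) a x}"
  define I where "I = {i. i < N1 \<and> Sup i \<in> A}"
  define J where "J = {j. j < N2 \<and> Dem j \<in> A}"
  have aA: "a \<in> A" unfolding A_def using conn_refl by blast
  have bA: "b \<notin> A" unfolding A_def using nc by blast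
  have clos: "Dem j \<in> A \<longleftrightarrow> Sup i \<in> A" if "0 < y i j" "i < N1" "j < N2" for i j
  proof -
    have "(i,j) \<in> supp N1 N2 y" using that unfolding supp_def by auto
    then have ad: "adj (supp N1 N2 y) (Sup i) (Dem j)" unfolding adj_def by blast
    show ?thesis
    proof
      assume "Dem j \<in> A"
      then have "connected_in (supp N1 N2 y) a (Dem j)" unfolding A_def by simp
      then show "Sup i \<in> A" unfolding A_def using conn_trans[OF _ conn_adj[OF adj_sym[OF ad]]] by blast
    next
      assume "Sup i \<in> A"
      then have "connected_in (supp N1 N2 y) a (Sup i)" unfolding A_def by simp
      then show "Dem j \<in> A" unfolding A_def using conn_trans[OF _ conn_adj[OF ad]] by blast
    qed
  qed
  have I: "I \<subseteq> {..<N1}" and J: "J \<subseteq> {..<N2}" unfolding I_def J_def by auto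
  have "sum u I - sum v J = (\<Sum>i\<in>I. \<Sum>j\<in>{..<N2} - J. y i j) - (\<Sum>i\<in>{..<N1} - I. \<Sum>j\<in>J. y i j)"
    using cut_identity[OF _ _ I J] yT' by blast
  also have "(\<Sum>i\<in>I. \<Sum>j\<in>{..<N2} - J. y i j) = 0"
  proof (intro sum.neutral ballI)
    fix i j assume "i \<in> I" "j \<in> {..<N2} - J"
    then have h: "i < N1" "j < N2" "Sup i \<in> A \<longleftrightarrow> Dem j \<notin> A" unfolding I_def J_def by auto
    have y0: "0 \<le> y i j" using yT' by blast
    show "y i j = 0"
    proof (rule ccontr)
      assume "y i j \<noteq> 0" then have "0 < y i j" using y0 by simp
      then show False using clos[OF _ h(1,2)] h(3) by blast
    qed
  qed
  also have "(\<Sum>i\<in>{..<N1} - I. \<Sum>j\<in>J. y i j) = 0"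
  proof (intro sum.neutral ballI)
    fix i j assume "i \<in> {..<N1} - I" "j \<in> J"
    then have h: "i < N1" "j < N2" "Sup i \<in> A \<longleftrightarrow> Dem j \<notin> A" unfolding I_def J_def by auto
    have y0: "0 \<le> y i j" using yT' by blast
    show "y i j = 0"
    proof (rule ccontr)
      assume "y i j \<noteq> 0" then have "0 < y i j" using y0 by simp
      then show False using clos[OF _ h(1,2)] h(3) by blast
    qed
  qed
  finally have eq: "sum u I = sum v J" by simp
  have Ine: "I \<noteq> {}" and Jne: "J \<noteq> {}"
  proof -
    have "I \<noteq> {} \<and> J \<noteq> {}"
    proof (cases a)
      case (Sup i)
      then have i: "i < N1" "i \<in> I" using va aA unfolding valid_node_def I_def by auto
      have "0 < (\<Sum>j<N2. y i j)" using yT' up i by auto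
      have "\<exists>j<N2. y i j \<noteq> 0"
      proof (rule ccontr)
        assume "\<not> (\<exists>j<N2. y i j \<noteq> 0)"
        then have "(\<Sum>j<N2. y i j) = 0" by simp
        then show False using \<open>0 < (\<Sum>j<N2. y i j)\<close> by simp
      qed
      then obtain j where jj: "j < N2" "y i j \<noteq> 0" by blast
      have "0 \<le> y i j" using yT' by blast
      then have "0 < y i j" using jj by simp
      then have "Dem j \<in> A" using clos[OF _ i(1) jj(1)] i(2) unfolding I_def by simp
      then have "j \<in> J" using jj unfolding J_def by simp
      then show ?thesis using i by auto
    next
      case (Dem j)
      then have j: "j < N2" "j \<in> J" using va aA unfolding valid_node_def J_def by auto
      have "0 < (\<Sum>i<N1. y i j)" using yT' vp j by auto
      have "\<exists>i<N1. y i j \<noteq> 0"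
      proof (rule ccontr)
        assume "\<not> (\<exists>i<N1. y i j \<noteq> 0)"
        then have "(\<Sum>i<N1. y i j) = 0" by simp
        then show False using \<open>0 < (\<Sum>i<N1. y i j)\<close> by simp
      qed
      then obtain i where ii: "i < N1" "y i j \<noteq> 0" by blast
      have "0 \<le> y i j" using yT' by blast
      then have "0 < y i j" using ii by simp
      then have "Sup i \<in> A" using clos[OF _ ii(1) j(1)] j(2) unfolding J_def by simp
      then have "i \<in> I" using ii unfolding I_def by simp
      then show ?thesis using j by auto
    qed
    then show "I \<noteq> {}" "J \<noteq> {}" by auto
  qed
  have ps: "I \<subset> {..<N1} \<and> J \<subset> {..<N2}"
  proof (cases b)
    case (Sup i0)
    then have i0: "i0 < N1" "i0 \<notin> I" using vb bA unfolding valid_node_def I_def by auto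
    have Ip: "I \<subset> {..<N1}" using I i0 by auto
    have "sum u I < sum u {..<N1}"
    proof -
      have "sum u {..<N1} = sum u I + sum u ({..<N1} - I)" using sum.subset_diff[OF I, of u] by simp
      moreover have "0 < sum u ({..<N1} - I)"
        using i0 up by (intro sum_pos2[of _ i0]) auto
      ultimately show ?thesis by simp
    qed
    moreover have "sum v J \<le> sum v {..<N2}" using J vp by (intro sum_mono2) (auto simp: order_less_imp_le)
    moreover have "J \<noteq> {..<N2}" using calculation eq tot by auto
    ultimately show ?thesis using Ip J by auto
  next
    case (Dem j0)
    then have j0: "j0 < N2" "j0 \<notin> J" using vb bA unfolding valid_node_def J_def by auto
    have Jp: "J \<subset> {..<N2}" using J j0 by auto
    have "sum v J < sum v {..<N2}"
    proof -
      have "sum v {..<N2} = sum v J + sum v ({..<N2} - J)" using sum.subset_diff[OF J, of v] by simp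
      moreover have "0 < sum v ({..<N2} - J)"
        using j0 vp by (intro sum_pos2[of _ j0]) auto
      ultimately show ?thesis by simp
    qed
    moreover have "sum u I \<le> sum u {..<N1}" using I up by (intro sum_mono2) (auto simp: order_less_imp_le)
    moreover have "I \<noteq> {..<N1}" using calculation eq tot by auto
    ultimately show ?thesis using Jp I by auto
  qed
  show False using nd Ine Jne ps eq unfolding nondegenerate_def by blast
qed

lemma vertex_tree:
  assumes vx: "is_vertex N1 N2 u v y" and up: "\<forall>i<N1. 0 < u i" and vp: "\<forall>j<N2. 0 < v j"
    and tot: "(\<Sum>i<N1. u i) = (\<Sum>j<N2. v j)" and nd: "nondegenerate N1 N2 u v"
  shows "tree N1 N2 (supp N1 N2 y)"
proof -
  have yT: "y \<in> TP N1 N2 u v" using vx unfolding is_vertex_def by blast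
  show ?thesis unfolding tree_def
    using inrange_supp vertex_conn[OF yT up vp tot nd] vertex_sep[OF vx] by blast
qed


section \<open>Pivot\<close>

definition Pdir :: "nat \<Rightarrow> nat \<Rightarrow> (nat \<Rightarrow> nat \<Rightarrow> real) \<Rightarrow> nat \<times> nat \<Rightarrow> (nat \<Rightarrow> nat \<Rightarrow> real) \<Rightarrow> bool" where
  "Pdir N1 N2 y e d \<longleftrightarrow> d (fst e) (snd e) = 1
      \<and> (\<forall>i j. d i j \<noteq> 0 \<longrightarrow> (i,j) \<in> supp N1 N2 y \<union> {e})
      \<and> (\<forall>i<N1. (\<Sum>j<N2. d i j) = 0)
      \<and> (\<forall>j<N2. (\<Sum>i<N1. d i j) = 0)"

lemma pivot_dir_P:
  assumes vx: "is_vertex N1 N2 u v y" and T: "tree N1 N2 (supp N1 N2 y)"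
    and e1: "fst e < N1" and e2: "snd e < N2" and ne: "e \<notin> supp N1 N2 y"
  shows "Pdir N1 N2 y e (pivot_dir N1 N2 y e)"
proof -
  obtain s t where e: "e = (s,t)" by (cases e)
  have vs: "valid_node N1 N2 (Sup s)" "valid_node N1 N2 (Dem t)" using e1 e2 e unfolding valid_node_def by auto
  obtain W where W: "walk (supp N1 N2 y) W" "hd W = Sup s" "last W = Dem t"
    using tree_conn[OF T vs] unfolding connected_in_def by blast
  define d0 where "d0 = (\<lambda>a b. ind (Sup s) (Dem t) a b - fw W a b)"
  have ex: "Pdir N1 N2 y e d0"
    unfolding Pdir_def
  proof (intro conjI)
    have "fw W s t = 0" using fw_supp[OF W(1), of s t] ne e by auto
    then show "d0 (fst e) (snd e) = 1" unfolding d0_def ind_def e by simp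
    show "\<forall>i j. d0 i j \<noteq> 0 \<longrightarrow> (i, j) \<in> supp N1 N2 y \<union> {e}"
    proof (intro allI impI)
      fix i j assume "d0 i j \<noteq> 0"
      then have "ind (Sup s) (Dem t) i j \<noteq> 0 \<or> fw W i j \<noteq> 0" unfolding d0_def by auto
      then show "(i, j) \<in> supp N1 N2 y \<union> {e}"
      proof
        assume "ind (Sup s) (Dem t) i j \<noteq> 0"
        then have "i = s \<and> j = t" unfolding ind_def by (simp split: if_splits)
        then show ?thesis using e by simp
      next
        assume "fw W i j \<noteq> 0" then show ?thesis using fw_supp[OF W(1)] by blast
      qed
    qed
    show "\<forall>i<N1. (\<Sum>j<N2. d0 i j) = 0" "\<forall>j<N2. (\<Sum>i<N1. d0 i j) = 0"
      using circ_from_walk[OF W(1) inrange_supp W(2,3)] unfolding d0_def by auto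
  qed
  have un: "d1 = d2" if "Pdir N1 N2 y e d1" "Pdir N1 N2 y e d2" for d1 d2
  proof -
    define c where "c = (\<lambda>a b. d1 a b - d2 a b)"
    have sp: "\<forall>a b. c a b \<noteq> 0 \<longrightarrow> a < N1 \<and> b < N2 \<and> 0 < y a b"
    proof (intro allI impI)
      fix a b assume c0: "c a b \<noteq> 0"
      then have "(a,b) \<noteq> e" using that unfolding c_def Pdir_def by auto
      moreover have "d1 a b \<noteq> 0 \<or> d2 a b \<noteq> 0" using c0 unfolding c_def by auto
      ultimately have "(a,b) \<in> supp N1 N2 y" using that unfolding Pdir_def by blast
      then show "a < N1 \<and> b < N2 \<and> 0 < y a b" unfolding supp_def by simp
    qed
    have rs: "\<forall>a<N1. (\<Sum>b<N2. c a b) = 0" using that unfolding c_def Pdir_def by (simp add: sum_subtractf)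
    have cs: "\<forall>b<N2. (\<Sum>a<N1. c a b) = 0" using that unfolding c_def Pdir_def by (simp add: sum_subtractf)
    have "c = (\<lambda>a b. 0)" using vertex_no_circ[OF vx sp rs cs] .
    then show "d1 = d2" unfolding c_def by (intro ext) (metis eq_iff_diff_eq_0)
  qed
  have "\<exists>!d. Pdir N1 N2 y e d" using ex un by blast
  then have "Pdir N1 N2 y e (THE d. Pdir N1 N2 y e d)" by (rule theI')
  moreover have "pivot_dir N1 N2 y e = (THE d. Pdir N1 N2 y e d)"
    unfolding pivot_dir_def Pdir_def by simp
  ultimately show ?thesis by simp
qed

lemma pivot_props:
  assumes vx: "is_vertex N1 N2 u v y" and T: "tree N1 N2 (supp N1 N2 y)"
    and e1: "fst e < N1" and e2: "snd e < N2" and ne: "e \<notin> supp N1 N2 y"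
  shows "\<forall>i j. 0 \<le> pivot N1 N2 y e i j"
    and "\<forall>i<N1. (\<Sum>j<N2. pivot N1 N2 y e i j) = u i"
    and "\<forall>j<N2. (\<Sum>i<N1. pivot N1 N2 y e i j) = v j"
    and "\<forall>i j. pivot N1 N2 y e i j \<noteq> 0 \<longrightarrow> (i,j) \<in> supp N1 N2 y \<union> {e}"
proof -
  define d where "d = pivot_dir N1 N2 y e"
  have P: "Pdir N1 N2 y e d" using pivot_dir_P[OF assms] unfolding d_def .
  have yT: "y \<in> TP N1 N2 u v" using vx unfolding is_vertex_def by blast
  note yT' = yT[unfolded TP_iff]
  define T0 where "T0 = {t::real. 0 \<le> t \<and> (\<forall>i j. 0 \<le> y i j + t * d i j)}"
  define t where "t = pivot_step N1 N2 y e"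
  have tdef: "t = Sup_class.Sup T0" unfolding t_def T0_def pivot_step_def d_def by simp
  obtain s0 t0 where e: "e = (s0,t0)" by (cases e)
  have "\<exists>j<N2. d s0 j < 0"
  proof (rule ccontr)
    assume "\<not> (\<exists>j<N2. d s0 j < 0)"
    then have nn: "\<forall>j<N2. 0 \<le> d s0 j" by auto
    have "d s0 t0 \<le> (\<Sum>j<N2. d s0 j)" using nn e2 e by (intro member_le_sum) auto
    moreover have "(\<Sum>j<N2. d s0 j) = 0" using P e1 e unfolding Pdir_def by simp
    moreover have "d s0 t0 = 1" using P e unfolding Pdir_def by simp
    ultimately show False by simp
  qed
  then obtain j0 where j0: "j0 < N2" "d s0 j0 < 0" by blast
  have ub: "\<And>x. x \<in> T0 \<Longrightarrow> x \<le> y s0 j0 / (- d s0 j0)"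
  proof -
    fix x assume "x \<in> T0"
    then have "0 \<le> y s0 j0 + x * d s0 j0" unfolding T0_def by blast
    then have "x * (- d s0 j0) \<le> y s0 j0" by simp
    moreover have "0 < - d s0 j0" using j0 by simp
    ultimately show "x \<le> y s0 j0 / (- d s0 j0)" using pos_le_divide_eq by blast
  qed
  have bdd: "bdd_above T0" using ub unfolding bdd_above_def by blast
  have z0: "0 \<in> T0" unfolding T0_def using yT' by simp
  have tpos: "0 \<le> t" unfolding tdef using cSup_upper[OF z0 bdd] .
  have nonneg: "0 \<le> y i j + t * d i j" for i j
  proof (cases "0 \<le> d i j")
    case True then show ?thesis using tpos yT' by simp
  next
    case False
    have "\<And>x. x \<in> T0 \<Longrightarrow> x \<le> y i j / (- d i j)"
    proof -
      fix x assume "x \<in> T0"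
      then have "0 \<le> y i j + x * d i j" unfolding T0_def by blast
      then have "x * (- d i j) \<le> y i j" by simp
      moreover have "0 < - d i j" using False by simp
      ultimately show "x \<le> y i j / (- d i j)" using pos_le_divide_eq by blast
    qed
    then have "t \<le> y i j / (- d i j)" unfolding tdef using z0 by (intro cSup_least) auto
    moreover have "0 < - d i j" using False by simp
    ultimately have "t * (- d i j) \<le> y i j" using pos_le_divide_eq by blast
    then show ?thesis by simp
  qed
  have piv: "pivot N1 N2 y e = (\<lambda>i j. y i j + t * d i j)" unfolding pivot_def t_def d_def by simp
  show "\<forall>i j. 0 \<le> pivot N1 N2 y e i j" using nonneg piv by simp
  show "\<forall>i<N1. (\<Sum>j<N2. pivot N1 N2 y e i j) = u i"
    using yT' P unfolding piv Pdir_def by (simp add: sum.distrib sum_distrib_left[symmetric])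
  show "\<forall>j<N2. (\<Sum>i<N1. pivot N1 N2 y e i j) = v j"
    using yT' P unfolding piv Pdir_def by (simp add: sum.distrib sum_distrib_left[symmetric])
  show "\<forall>i j. pivot N1 N2 y e i j \<noteq> 0 \<longrightarrow> (i,j) \<in> supp N1 N2 y \<union> {e}"
  proof (intro allI impI)
    fix i j assume "pivot N1 N2 y e i j \<noteq> 0"
    then have "y i j \<noteq> 0 \<or> d i j \<noteq> 0" unfolding piv by auto
    then show "(i,j) \<in> supp N1 N2 y \<union> {e}"
    proof
      assume y0: "y i j \<noteq> 0"
      then have ij: "i < N1 \<and> j < N2" using yT' by (meson not_le)
      have "0 \<le> y i j" using yT' by blast
      then have "0 < y i j" using y0 by simp
      with ij show ?thesis unfolding supp_def by simp
    next
      assume "d i j \<noteq> 0" then show ?thesis using P unfolding Pdir_def by blast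
    qed
  qed
qed


lemma edge_num_SupRoot:
  assumes T: "tree N1 N2 T" and vs: "valid_node N1 N2 (Sup s)" and ab: "(a,b) \<in> T"
  shows "odd (edge_num T (Sup s) (a,b)) \<longleftrightarrow> dist T (Sup s) (Dem b) = dist T (Sup s) (Sup a) + 1"
proof -
  have ad: "adj T (Sup a) (Dem b)" using ab unfolding adj_def by blast
  have ir: "inrange N1 N2 T" using T tree_inrange by blast
  have v: "valid_node N1 N2 (Sup a)" "valid_node N1 N2 (Dem b)" using adj_valid[OF ir ad] by auto
  have p1: "odd (dist T (Sup s) (Dem b))" using dist_parity[OF tree_conn[OF T vs v(2)]] by simp
  have p2: "even (dist T (Sup s) (Sup a))" using dist_parity[OF tree_conn[OF T vs v(1)]] by simp
  have en: "edge_num T (Sup s) (a,b) = max (dist T (Sup s) (Sup a)) (dist T (Sup s) (Dem b))"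
    unfolding edge_num_def by simp
  from step_any[OF T vs ad] show ?thesis
  proof
    assume h: "dist T (Sup s) (Dem b) = dist T (Sup s) (Sup a) + 1"
    then have "edge_num T (Sup s) (a,b) = dist T (Sup s) (Dem b)" using en by simp
    then show ?thesis using h p1 by simp
  next
    assume h: "dist T (Sup s) (Sup a) = dist T (Sup s) (Dem b) + 1"
    then have "edge_num T (Sup s) (a,b) = dist T (Sup s) (Sup a)" using en by simp
    then show ?thesis using h p2 by simp
  qed
qed

lemma edge_num_DemRoot:
  assumes T: "tree N1 N2 T" and vs: "valid_node N1 N2 (Dem r)" and ab: "(a,b) \<in> T"
  shows "odd (edge_num T (Dem r) (a,b)) \<longleftrightarrow> dist T (Dem r) (Sup a) = dist T (Dem r) (Dem b) + 1"
    and "even (edge_num T (Dem r) (a,b)) \<longleftrightarrow> dist T (Dem r) (Dem b) = dist T (Dem r) (Sup a) + 1"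
proof -
  have ad: "adj T (Sup a) (Dem b)" using ab unfolding adj_def by blast
  have ir: "inrange N1 N2 T" using T tree_inrange by blast
  have v: "valid_node N1 N2 (Sup a)" "valid_node N1 N2 (Dem b)" using adj_valid[OF ir ad] by auto
  have p1: "even (dist T (Dem r) (Dem b))" using dist_parity[OF tree_conn[OF T vs v(2)]] by simp
  have p2: "odd (dist T (Dem r) (Sup a))" using dist_parity[OF tree_conn[OF T vs v(1)]] by simp
  have en: "edge_num T (Dem r) (a,b) = max (dist T (Dem r) (Sup a)) (dist T (Dem r) (Dem b))"
    unfolding edge_num_def by simp
  have "(odd (edge_num T (Dem r) (a,b)) \<longleftrightarrow> dist T (Dem r) (Sup a) = dist T (Dem r) (Dem b) + 1) \<and>
    (even (edge_num T (Dem r) (a,b)) \<longleftrightarrow> dist T (Dem r) (Dem b) = dist T (Dem r) (Sup a) + 1)"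
  using step_any[OF T vs ad]
  proof
    assume h: "dist T (Dem r) (Dem b) = dist T (Dem r) (Sup a) + 1"
    then have "edge_num T (Dem r) (a,b) = dist T (Dem r) (Dem b)" using en by simp
    then show ?thesis using h p1 by simp
  next
    assume h: "dist T (Dem r) (Sup a) = dist T (Dem r) (Dem b) + 1"
    then have "edge_num T (Dem r) (a,b) = dist T (Dem r) (Sup a)" using en by simp
    then show ?thesis using h p2 by simp
  qed
  then show "odd (edge_num T (Dem r) (a,b)) \<longleftrightarrow> dist T (Dem r) (Sup a) = dist T (Dem r) (Dem b) + 1"
    "even (edge_num T (Dem r) (a,b)) \<longleftrightarrow> dist T (Dem r) (Dem b) = dist T (Dem r) (Sup a) + 1" by blast+
qed

lemma nested_ge:
  fixes w :: "nat \<Rightarrow> nat \<Rightarrow> real"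
  assumes "finite A" "finite B" "a \<in> A" "b \<in> B" "\<forall>i j. 0 \<le> w i j"
  shows "w a b \<le> (\<Sum>i\<in>A. \<Sum>j\<in>B. w i j)"
proof -
  have "w a b \<le> (\<Sum>j\<in>B. w a j)" using assms by (intro member_le_sum) auto
  also have "\<dots> \<le> (\<Sum>i\<in>A. \<Sum>j\<in>B. w i j)" using assms by (intro member_le_sum sum_nonneg) auto
  finally show ?thesis .
qed

lemma nested_nonneg:
  fixes w :: "nat \<Rightarrow> nat \<Rightarrow> real"
  assumes "\<forall>i j. 0 \<le> w i j"
  shows "0 \<le> (\<Sum>i\<in>A. \<Sum>j\<in>B. w i j)"
  using assms by (intro sum_nonneg) auto

lemma nested_zero:
  fixes w :: "nat \<Rightarrow> nat \<Rightarrow> real"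
  assumes "\<And>i j. i \<in> A \<Longrightarrow> j \<in> B \<Longrightarrow> w i j = 0"
  shows "(\<Sum>i\<in>A. \<Sum>j\<in>B. w i j) = 0"
  using assms by simp

lemma step1:
  assumes T: "tree N1 N2 (supp N1 N2 y)" and yT: "y \<in> TP N1 N2 u v"
    and zn: "\<forall>i j. 0 \<le> z i j"
    and zr: "\<forall>i<N1. (\<Sum>j<N2. z i j) = u i" and zc: "\<forall>j<N2. (\<Sum>i<N1. z i j) = v j"
    and zs: "\<forall>i j. z i j \<noteq> 0 \<longrightarrow> (i,j) \<in> supp N1 N2 y \<union> {(s,t)}"
    and g: "(i0,j0) \<in> supp N1 N2 y" and z0: "z i0 j0 = 0" and s: "s < N1"
  shows "dist (supp N1 N2 y) (Sup s) (Dem j0) = dist (supp N1 N2 y) (Sup s) (Sup i0) + 1"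
proof -
  define C where "C = supp N1 N2 y"
  note yT' = yT[unfolded TP_iff]
  define A where "A = {x. connected_in (C - {(i0,j0)}) (Sup i0) x}"
  have dA: "Dem j0 \<notin> A"
  proof
    assume "Dem j0 \<in> A"
    then have "connected_in (supp N1 N2 y - {(i0,j0)}) (Sup i0) (Dem j0)" unfolding A_def C_def by simp
    from tree_sep[OF T g this] show False by simp
  qed
  have sA0: "Sup i0 \<in> A" unfolding A_def using conn_refl by blast
  have clos: "x \<in> A \<Longrightarrow> adj (C - {(i0,j0)}) x w \<Longrightarrow> w \<in> A" for x w
    unfolding A_def using conn_trans conn_adj by blast
  have i0: "i0 < N1" "j0 < N2" using g unfolding supp_def by auto
  have sA: "Sup s \<in> A"
  proof (rule ccontr)
    assume nsA: "Sup s \<notin> A"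
    define I where "I = {i. i < N1 \<and> Sup i \<in> A}"
    define J where "J = {j. j < N2 \<and> Dem j \<in> A}"
    have I: "I \<subseteq> {..<N1}" and J: "J \<subseteq> {..<N2}" unfolding I_def J_def by auto
    have cy: "sum u I - sum v J = (\<Sum>i\<in>I. \<Sum>j\<in>{..<N2} - J. y i j) - (\<Sum>i\<in>{..<N1} - I. \<Sum>j\<in>J. y i j)"
      using cut_identity[OF _ _ I J] yT' by blast
    have cz: "sum u I - sum v J = (\<Sum>i\<in>I. \<Sum>j\<in>{..<N2} - J. z i j) - (\<Sum>i\<in>{..<N1} - I. \<Sum>j\<in>J. z i j)"
      using cut_identity[OF zr zc I J] .
    have "(\<Sum>i\<in>{..<N1} - I. \<Sum>j\<in>J. y i j) = 0"
    proof (rule nested_zero)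
      fix i j assume ij: "i \<in> {..<N1} - I" "j \<in> J"
      show "y i j = 0"
      proof (rule ccontr)
        assume "y i j \<noteq> 0"
        moreover have "0 \<le> y i j" using yT' by blast
        ultimately have "(i,j) \<in> C" using ij unfolding C_def supp_def J_def by auto
        moreover have "j \<noteq> j0" using ij dA unfolding J_def by auto
        ultimately have "adj (C - {(i0,j0)}) (Dem j) (Sup i)" unfolding adj_def by blast
        then have "Sup i \<in> A" using clos ij unfolding J_def by blast
        then show False using ij unfolding I_def by auto
      qed
    qed
    moreover have "y i0 j0 \<le> (\<Sum>i\<in>I. \<Sum>j\<in>{..<N2} - J. y i j)"
      using sA0 dA i0 yT' unfolding I_def J_def by (intro nested_ge) auto
    moreover have "0 < y i0 j0" using g unfolding supp_def by simp
    ultimately have pos: "0 < sum u I - sum v J" using cy by linarith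
    have "(\<Sum>i\<in>I. \<Sum>j\<in>{..<N2} - J. z i j) = 0"
    proof (rule nested_zero)
      fix i j assume ij: "i \<in> I" "j \<in> {..<N2} - J"
      show "z i j = 0"
      proof (rule ccontr)
        assume zz: "z i j \<noteq> 0"
        then have "(i,j) \<in> C \<union> {(s,t)}" using zs unfolding C_def by blast
        moreover have "(i,j) \<noteq> (s,t)" using ij nsA unfolding I_def by auto
        moreover have "(i,j) \<noteq> (i0,j0)" using zz z0 by auto
        ultimately have "adj (C - {(i0,j0)}) (Sup i) (Dem j)" unfolding adj_def by blast
        then have "Dem j \<in> A" using clos ij unfolding I_def by blast
        then show False using ij unfolding J_def by auto
      qed
    qed
    moreover have "0 \<le> (\<Sum>i\<in>{..<N1} - I. \<Sum>j\<in>J. z i j)" using nested_nonneg zn by blast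
    ultimately show False using cz pos by linarith
  qed
  have vs: "valid_node N1 N2 (Sup s)" "valid_node N1 N2 (Dem j0)" using s i0 unfolding valid_node_def by auto
  obtain W where W: "walk C W" "hd W = Sup s" "last W = Dem j0" "length W = Suc (dist C (Sup s) (Dem j0))"
    using dist_ex tree_conn[OF T vs] unfolding C_def by blast
  have "\<exists>k. Suc k < length W \<and> W!k \<in> A \<and> W!Suc k \<notin> A"
    using first_exit[OF W(1), of A] W(2,3) sA dA by simp
  then obtain k where k: "Suc k < length W" "W!k \<in> A" "W!Suc k \<notin> A" by blast
  have ad: "adj C (W!k) (W!Suc k)" using walk_nth[OF W(1) k(1)] .
  have "(W!k = Sup i0 \<and> W!Suc k = Dem j0) \<or> (W!k = Dem j0 \<and> W!Suc k = Sup i0)"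
  proof (rule ccontr)
    assume "\<not> ?thesis"
    then have "adj (C - {(i0,j0)}) (W!k) (W!Suc k)" using adj_remove[OF ad, of i0 j0] by simp
    then have "W!Suc k \<in> A" using clos[OF k(2)] by simp
    then show False using k(3) by simp
  qed
  then have Wk: "W!k = Sup i0" using k dA by auto
  have "walk C (take (Suc k) W)" using walk_take[OF W(1)] by simp
  moreover have "hd (take (Suc k) W) = Sup s" using W(2) k by (cases W) auto
  moreover have "last (take (Suc k) W) = Sup i0" using Wk k by (simp add: take_Suc_conv_app_nth)
  ultimately have "dist C (Sup s) (Sup i0) \<le> length (take (Suc k) W) - 1" by (rule dist_le)
  then have lt: "dist C (Sup s) (Sup i0) < dist C (Sup s) (Dem j0)" using k W(4) by simp
  have ad2: "adj C (Sup i0) (Dem j0)" using g unfolding adj_def C_def by blast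
  show ?thesis using step_any[OF T vs(1) ad2[unfolded C_def]] lt unfolding C_def by auto
qed


lemma step2:
  fixes yF z :: "nat \<Rightarrow> nat \<Rightarrow> real"
  assumes TC: "tree N1 N2 C" and TF: "tree N1 N2 F"
    and Fdef: "F = supp N1 N2 yF" and yFT: "yF \<in> TP N1 N2 u v"
    and zn: "\<forall>i j. 0 \<le> z i j"
    and zr: "\<forall>i<N1. (\<Sum>j<N2. z i j) = u i" and zc: "\<forall>j<N2. (\<Sum>i<N1. z i j) = v j"
    and zs: "\<forall>i j. z i j \<noteq> 0 \<longrightarrow> (i,j) \<in> C \<union> {(s,t)}"
    and z0: "z i0 j0 = 0" and fS: "(i0,j0) \<in> S" and SCF: "S \<subseteq> C \<inter> F"
    and eF: "(s,t) \<in> F" and eC: "(s,t) \<notin> C"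
    and ds: "ds < N2" and sN: "s < N1"
    and hyp2: "\<forall>e'\<in>S. plus_edge F ds e' \<longrightarrow> \<not> open_node N1 N2 F C S (Sup (fst e'))"
    and sin: "SIN F ds C S s"
    and ifh: "if (\<exists>e'\<in>F. fst e' = s \<and> minus_edge F ds e' \<and> e' \<notin> S)
         then minus_edge F ds (s,t) \<and> (s,t) \<notin> S else plus_edge F ds (s,t)"
    and dC0: "dist C (Sup s) (Dem j0) = dist C (Sup s) (Sup i0) + 1"
    and fmin: "minus_edge F ds (i0,j0)" and wcj0: "wc_dem C S j0"
  shows False
proof -
  define G where "G = wc_edges F C S \<union> {(s,t)}"
  define E where "E = G - {(i0,j0)}"
  define X where "X = {x. connected_in E (Dem j0) x}"
  define dF where "dF = dist F (Dem ds)"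
  define dC where "dC = dist C (Sup s)"
  define caseA where "caseA = (\<exists>e'\<in>F. fst e' = s \<and> minus_edge F ds e' \<and> e' \<notin> S)"
  have wcS: "wc_edges F C S \<subseteq> S" unfolding wc_edges_def by auto
  have EF: "E \<subseteq> F" unfolding E_def G_def using wcS SCF eF by auto
  have EF2: "E \<subseteq> F - {(i0,j0)}" using EF unfolding E_def by auto
  have adjE: "\<exists>i j. ((a = Sup i \<and> b = Dem j) \<or> (a = Dem j \<and> b = Sup i)) \<and> (i,j) \<noteq> (i0,j0)
      \<and> ((i,j) = (s,t) \<or> (i,j) \<in> wc_edges F C S)" if "adj E a b" for a b
    using that unfolding adj_def E_def G_def by blast
  have vds: "valid_node N1 N2 (Dem ds)" using ds unfolding valid_node_def by simp
  have vs: "valid_node N1 N2 (Sup s)" using sN unfolding valid_node_def by simp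
  have fF: "(i0,j0) \<in> F" and fC: "(i0,j0) \<in> C" using fS SCF by auto
  have irF: "inrange N1 N2 F" and irC: "inrange N1 N2 C" using TF TC tree_inrange by blast+
  have dF0: "dF (Dem j0) = dF (Sup i0) + 1"
    using fmin edge_num_DemRoot(2)[OF TF vds fF] unfolding minus_edge_def dF_def by simp
  have sopen: "\<not> wc_sup F S s" using eF eC SCF unfolding wc_sup_def by auto
  have adjF_f: "adj F (Sup i0) (Dem j0)" and adjC_f: "adj C (Sup i0) (Dem j0)"
    using fF fC unfolding adj_def by blast+
  have wcnode_S: "wc_node F C S (Sup i) = wc_sup F S i" for i unfolding wc_node_def by simp
  have wcnode_D: "wc_node F C S (Dem j) = wc_dem C S j" for j unfolding wc_node_def by simp
  have plus_ok: "wc_sup F S i" if "(i,j) \<in> S" "dF (Sup i) = dF (Dem j) + 1" for i j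
  proof -
    have ijF: "(i,j) \<in> F" using that SCF by auto
    have "plus_edge F ds (i,j)" unfolding plus_edge_def
      using ijF edge_num_DemRoot(1)[OF TF vds ijF] that(2) unfolding dF_def by simp
    then have "\<not> open_node N1 N2 F C S (Sup i)" using hyp2 that(1) by fastforce
    moreover have "valid_node N1 N2 (Sup i)" using irF ijF unfolding inrange_def valid_node_def by auto
    ultimately show ?thesis unfolding open_node_def wcnode_S by simp
  qed
  have sin_ok: "wc_dem C S j" if "(i,j) \<in> S" "dC (Dem j) = dC (Sup i) + 1" for i j
  proof -
    have ijC: "(i,j) \<in> C" using that SCF by auto
    have "odd (edge_num C (Sup s) (i,j))" using edge_num_SupRoot[OF TC vs ijC] that(2) unfolding dC_def by simp
    then show ?thesis using sin ijC that(1) unfolding SIN_def by auto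
  qed
  have key: "x = Sup s \<and> \<not> caseA" if xX: "x \<in> X" and nwc: "\<not> wc_node F C S x" for x
  proof -
    obtain P where P: "walk E P" "hd P = Dem j0" "last P = x" "length P = Suc (dist E (Dem j0) x)"
      using dist_ex xX unfolding X_def by blast
    define n where "n = length P"
    have nb: "P!k \<noteq> P!Suc (Suc k)" if "Suc (Suc k) < n" for k
      using nobt[OF P] that unfolding n_def by blast
    have P0: "P!0 = Dem j0" using P(2) walk_ne[OF P(1)] by (simp add: hd_conv_nth)
    have adjP: "adj E (P!k) (P!Suc k)" if "Suc k < n" for k using walk_nth[OF P(1)] that unfolding n_def by blast
    have adjPF: "adj F (P!k) (P!Suc k)" if "Suc k < n" for k using adj_mono[OF adjP[OF that] EF] .
    have PF: "dF (P!Suc k) = dF (P!k) + 1" if "Suc k < n" for k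
      using that
    proof (induction k)
      case 0
      obtain i j where ij: "(P!0 = Sup i \<and> P!1 = Dem j) \<or> (P!0 = Dem j \<and> P!1 = Sup i)" "(i,j) \<noteq> (i0,j0)"
        using adjE[OF adjP[OF 0]] by auto
      then have P1: "P!1 = Sup i" "j = j0" using P0 by auto
      then have ii: "i \<noteq> i0" using ij by auto
      have a1: "adj F (Sup i) (Dem j0)" using adjPF[OF 0] P0 P1 adj_sym by simp
      have "dF (Sup i) = dF (Dem j0) + 1 \<or> dF (Dem j0) = dF (Sup i) + 1"
        using step_any[OF TF vds a1] unfolding dF_def by auto
      moreover have "dF (Dem j0) = dF (Sup i) + 1 \<Longrightarrow> False"
        using parent_unique[OF TF vds a1 adjF_f] dF0 ii unfolding dF_def by auto
      ultimately show ?case using P0 P1 by auto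
    next
      case (Suc k)
      have h: "dF (P!Suc k) = dF (P!k) + 1" using Suc by simp
      show ?case using step_down[OF TF vds adjPF[of k] adjPF[of "Suc k"] nb[of k]] h Suc.prems
        unfolding dF_def by simp
    qed
    have Pe: False if "Suc k < n" "P!k = Sup s" "P!Suc k = Dem t" for k
    proof -
      have "k \<noteq> 0"
      proof
        assume "k = 0" then show False using that(2) P0 by simp
      qed
      then obtain k' where k': "k = Suc k'" by (cases k) auto
      have a: "adj E (P!k') (Sup s)" using adjP[of k'] that k' by simp
      obtain i j where ij: "(P!k' = Sup i \<and> Sup s = Dem j) \<or> (P!k' = Dem j \<and> Sup s = Sup i)"
          "(i,j) = (s,t) \<or> (i,j) \<in> wc_edges F C S"
        using adjE[OF a] by blast
      then have Pk': "P!k' = Dem j" "i = s" by auto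
      have d: "dF (Sup s) = dF (Dem j) + 1" using PF[of k'] that k' Pk' by simp
      show False
      proof (cases "j = t")
        case True
        then show False using nb[of k'] that k' Pk' by simp
      next
        case False
        then have "(s,j) \<in> wc_edges F C S" using ij Pk' by auto
        then have "(s,j) \<in> S" using wcS by blast
        then have "wc_sup F S s" using plus_ok d by blast
        then show False using sopen by simp
      qed
    qed
    have estep_C: "adj C (P!k) (P!Suc k)"
      if k1: "Suc k < n" and k2: "\<not> ((P!k = Sup s \<and> P!Suc k = Dem t) \<or> (P!k = Dem t \<and> P!Suc k = Sup s))" for k
    proof -
      have a: "adj E (P!k) (P!Suc k)" using adjP[OF k1] .
      obtain i j where ij: "(P!k = Sup i \<and> P!Suc k = Dem j) \<or> (P!k = Dem j \<and> P!Suc k = Sup i)"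
          "(i,j) = (s,t) \<or> (i,j) \<in> wc_edges F C S"
        using adjE[OF a] by blast
      then have "(i,j) \<in> wc_edges F C S" using k2 by auto
      then have "(i,j) \<in> C" using wcS SCF by blast
      then show ?thesis using ij(1) unfolding adj_def by blast
    qed
    have PC: "dC (P!Suc k) = dC (P!k) + 1"
      if "Suc k < n" "\<not> ((P!k = Sup s \<and> P!Suc k = Dem t) \<or> (P!k = Dem t \<and> P!Suc k = Sup s))" for k
      using that
    proof (induction k)
      case 0
      obtain i j where ij: "(P!0 = Sup i \<and> P!1 = Dem j) \<or> (P!0 = Dem j \<and> P!1 = Sup i)" "(i,j) \<noteq> (i0,j0)"
        using adjE[OF adjP[OF 0(1)]] by auto
      then have P1: "P!1 = Sup i" "j = j0" using P0 by auto
      then have ii: "i \<noteq> i0" using ij by auto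
      have a1: "adj C (Sup i) (Dem j0)" using estep_C[OF 0(1,2)] P0 P1 adj_sym by simp
      have "dC (Sup i) = dC (Dem j0) + 1 \<or> dC (Dem j0) = dC (Sup i) + 1"
        using step_any[OF TC vs a1] unfolding dC_def by auto
      moreover have "dC (Dem j0) = dC (Sup i) + 1 \<Longrightarrow> False"
        using parent_unique[OF TC vs a1 adjC_f] dC0 ii unfolding dC_def by auto
      ultimately show ?case using P0 P1 by auto
    next
      case (Suc k)
      have aC2: "adj C (P!Suc k) (P!Suc (Suc k))" using estep_C[OF Suc.prems] .
      show ?case
      proof (cases "(P!k = Sup s \<and> P!Suc k = Dem t) \<or> (P!k = Dem t \<and> P!Suc k = Sup s)")
        case True
        then have "P!Suc k = Sup s" using Pe[of k] Suc.prems by auto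
        moreover have "dC (Sup s) = 0" unfolding dC_def by (rule dist_self)
        ultimately show ?thesis using step_any[OF TC vs aC2] unfolding dC_def by auto
      next
        case False
        have h: "dC (P!Suc k) = dC (P!k) + 1" using Suc.IH False Suc.prems by simp
        have aC1: "adj C (P!k) (P!Suc k)" using estep_C[of k] False Suc.prems by simp
        show ?thesis using step_down[OF TC vs aC1 aC2 nb[of k]] h Suc.prems unfolding dC_def by simp
      qed
    qed
    have "n \<noteq> 1"
    proof
      assume "n = 1"
      then have "x = Dem j0" using P(3) P0 walk_ne[OF P(1)] unfolding n_def by (simp add: last_conv_nth)
      then show False using nwc wcj0 wcnode_D by simp
    qed
    moreover have "n \<noteq> 0" using walk_ne[OF P(1)] unfolding n_def by simp
    ultimately have n2: "2 \<le> n" by linarith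
    define k where "k = n - 2"
    have k: "Suc k < n" "n = Suc (Suc k)" using n2 unfolding k_def by auto
    have xk: "P!Suc k = x" using P(3) walk_ne[OF P(1)] k unfolding n_def by (simp add: last_conv_nth)
    show ?thesis
    proof (cases "(P!k = Sup s \<and> P!Suc k = Dem t) \<or> (P!k = Dem t \<and> P!Suc k = Sup s)")
      case True
      then have Pk: "P!k = Dem t" "x = Sup s" using Pe[of k] k xk by auto
      have "\<not> caseA"
      proof
        assume cA: caseA
        then have "minus_edge F ds (s,t)" using ifh unfolding caseA_def by simp
        then have "dF (Dem t) = dF (Sup s) + 1"
          using edge_num_DemRoot(2)[OF TF vds eF] unfolding minus_edge_def dF_def by simp
        moreover have "dF (Sup s) = dF (Dem t) + 1" using PF[OF k(1)] Pk xk by simp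
        ultimately show False by simp
      qed
      then show ?thesis using Pk by simp
    next
      case False
      obtain i j where ij: "(P!k = Sup i \<and> P!Suc k = Dem j) \<or> (P!k = Dem j \<and> P!Suc k = Sup i)"
          "(i,j) = (s,t) \<or> (i,j) \<in> wc_edges F C S"
        using adjE[OF adjP[OF k(1)]] by blast
      then have ijw: "(i,j) \<in> wc_edges F C S" using False by auto
      then have ijS: "(i,j) \<in> S" using wcS by blast
      show ?thesis
      proof (cases "P!k = Sup i \<and> P!Suc k = Dem j")
        case True
        have "dC (Dem j) = dC (Sup i) + 1" using PC[OF k(1) False] True by simp
        then have "wc_dem C S j" using sin_ok ijS by blast
        then have "wc_node F C S (Dem j)" using wcnode_D by simp
        moreover have "x = Dem j" using xk True by simp
        ultimately show ?thesis using nwc by simp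
      next
        case False2: False
        then have Pk: "P!k = Dem j" "P!Suc k = Sup i" using ij(1) by auto
        have "dF (Sup i) = dF (Dem j) + 1" using PF[OF k(1)] Pk by simp
        then have "wc_sup F S i" using plus_ok ijS by blast
        then have "wc_node F C S (Sup i)" using wcnode_S by simp
        moreover have "x = Sup i" using xk Pk by simp
        ultimately show ?thesis using nwc by simp
      qed
    qed
  qed
  have closX: "w \<in> X" if "x \<in> X" "adj E x w" for x w
    using that unfolding X_def using conn_trans conn_adj by blast
  have j0X: "Dem j0 \<in> X" unfolding X_def using conn_refl by blast
  have i0X: "Sup i0 \<notin> X"
  proof
    assume "Sup i0 \<in> X"
    then have "connected_in E (Dem j0) (Sup i0)" unfolding X_def by simp
    then have "connected_in (F - {(i0,j0)}) (Dem j0) (Sup i0)" using conn_mono EF2 by blast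
    from tree_sep[OF TF fF this] show False by simp
  qed
  have bF: "Dem j \<in> X" if iX: "Sup i \<in> X" and ijF: "(i,j) \<in> F" for i j
  proof (cases "wc_sup F S i")
    case True
    then have "(i,j) \<in> wc_edges F C S" using ijF unfolding wc_sup_def wc_edges_def wc_node_def by auto
    moreover have "i \<noteq> i0" using iX i0X by auto
    ultimately have "adj E (Sup i) (Dem j)" unfolding adj_def E_def G_def by blast
    then show ?thesis using closX iX by blast
  next
    case False
    then have "Sup i = Sup s \<and> \<not> caseA" using key[OF iX] wcnode_S by simp
    then have iis: "i = s" and ncA: "\<not> caseA" by auto
    have pe: "plus_edge F ds (s,t)" using ifh ncA unfolding caseA_def by simp
    have "(i,j) \<in> G - {(i0,j0)}"
    proof (cases "j = t")
      case True
      then show ?thesis using iis fC eC unfolding G_def by auto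
    next
      case jt: False
      have "(s,j) \<in> S"
      proof (rule ccontr)
        assume nS: "(s,j) \<notin> S"
        have "\<not> minus_edge F ds (s,j)"
        proof
          assume "minus_edge F ds (s,j)"
          then have caseA unfolding caseA_def using ijF iis nS by (intro bexI[of _ "(s,j)"]) auto
          then show False using ncA by simp
        qed
        then have "odd (edge_num F (Dem ds) (s,j))" using ijF iis unfolding minus_edge_def by simp
        then have d1: "dF (Sup s) = dF (Dem j) + 1"
          using edge_num_DemRoot(1)[OF TF vds, of s j] ijF iis unfolding dF_def by simp
        have d2: "dF (Sup s) = dF (Dem t) + 1"
          using pe edge_num_DemRoot(1)[OF TF vds eF] unfolding plus_edge_def dF_def by simp
        have "adj F (Dem j) (Sup s)" "adj F (Dem t) (Sup s)" using ijF iis eF unfolding adj_def by blast+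
        from parent_unique[OF TF vds this] d1 d2 have "Dem j = Dem t" unfolding dF_def by simp
        then show False using jt by simp
      qed
      moreover have "dC (Dem j) = dC (Sup s) + 1"
      proof -
        have "adj C (Sup s) (Dem j)" using \<open>(s,j) \<in> S\<close> SCF unfolding adj_def by blast
        from step_any[OF TC vs this] show ?thesis using dist_self unfolding dC_def by auto
      qed
      ultimately have "wc_dem C S j" using sin_ok by blast
      then have "(s,j) \<in> wc_edges F C S" using \<open>(s,j) \<in> S\<close> unfolding wc_edges_def wc_node_def by auto
      moreover have "s \<noteq> i0" using iX i0X iis by auto
      ultimately show ?thesis using iis unfolding G_def by auto
    qed
    then have "adj E (Sup i) (Dem j)" unfolding adj_def E_def by blast
    then show ?thesis using closX iX by blast
  qed
  have cC: "Sup i \<in> X" if jX: "Dem j \<in> X" and ij: "(i,j) \<in> C \<union> {(s,t)}" and nf: "(i,j) \<noteq> (i0,j0)" for i j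
  proof -
    have "wc_dem C S j"
    proof (rule ccontr)
      assume "\<not> wc_dem C S j"
      then have "Dem j = Sup s" using key[OF jX] wcnode_D by simp
      then show False by simp
    qed
    then have "(i,j) \<in> G" using ij unfolding G_def wc_dem_def wc_edges_def wc_node_def by auto
    then have "adj E (Dem j) (Sup i)" using nf unfolding adj_def E_def by blast
    then show ?thesis using closX jX by blast
  qed
  define I where "I = {i. i < N1 \<and> Sup i \<in> X}"
  define J where "J = {j. j < N2 \<and> Dem j \<in> X}"
  have I: "I \<subseteq> {..<N1}" and J: "J \<subseteq> {..<N2}" unfolding I_def J_def by auto
  note yFT' = yFT[unfolded TP_iff]
  have cF: "sum u I - sum v J = (\<Sum>i\<in>I. \<Sum>j\<in>{..<N2} - J. yF i j) - (\<Sum>i\<in>{..<N1} - I. \<Sum>j\<in>J. yF i j)"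
    using cut_identity[OF _ _ I J] yFT' by blast
  have cz: "sum u I - sum v J = (\<Sum>i\<in>I. \<Sum>j\<in>{..<N2} - J. z i j) - (\<Sum>i\<in>{..<N1} - I. \<Sum>j\<in>J. z i j)"
    using cut_identity[OF zr zc I J] .
  have "(\<Sum>i\<in>I. \<Sum>j\<in>{..<N2} - J. yF i j) = 0"
  proof (rule nested_zero)
    fix i j assume ij: "i \<in> I" "j \<in> {..<N2} - J"
    show "yF i j = 0"
    proof (rule ccontr)
      assume "yF i j \<noteq> 0"
      moreover have "0 \<le> yF i j" using yFT' by blast
      ultimately have "(i,j) \<in> F" using ij unfolding Fdef supp_def I_def by auto
      then have "Dem j \<in> X" using bF ij unfolding I_def by blast
      then show False using ij unfolding J_def by auto
    qed
  qed
  moreover have "yF i0 j0 \<le> (\<Sum>i\<in>{..<N1} - I. \<Sum>j\<in>J. yF i j)"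
    using i0X j0X fF yFT' unfolding I_def J_def Fdef supp_def by (intro nested_ge) auto
  moreover have "0 < yF i0 j0" using fF unfolding Fdef supp_def by simp
  ultimately have neg: "sum u I - sum v J < 0" using cF by linarith
  have "(\<Sum>i\<in>{..<N1} - I. \<Sum>j\<in>J. z i j) = 0"
  proof (rule nested_zero)
    fix i j assume ij: "i \<in> {..<N1} - I" "j \<in> J"
    show "z i j = 0"
    proof (rule ccontr)
      assume zz: "z i j \<noteq> 0"
      then have "(i,j) \<in> C \<union> {(s,t)}" using zs by blast
      moreover have "(i,j) \<noteq> (i0,j0)" using zz z0 by auto
      ultimately have "Sup i \<in> X" using cC ij unfolding J_def by blast
      then show False using ij unfolding I_def by auto
    qed
  qed
  moreover have "0 \<le> (\<Sum>i\<in>I. \<Sum>j\<in>{..<N2} - J. z i j)" using nested_nonneg zn by blast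
  ultimately show False using cz neg by linarith
qed


theorem lemma4:
  fixes N1 N2 :: nat and u v :: "nat \<Rightarrow> real"
    and y yF :: "nat \<Rightarrow> nat \<Rightarrow> real"
    and S :: "(nat \<times> nat) set" and ds s :: nat and e :: "nat \<times> nat"
  defines "C \<equiv> supp N1 N2 y" and "F \<equiv> supp N1 N2 yF"
  assumes "N1 \<ge> 1" and "N2 \<ge> 1"
    and "\<forall>i<N1. 0 < u i" and "\<forall>j<N2. 0 < v j"
    and "(\<Sum>i<N1. u i) = (\<Sum>j<N2. v j)"
    and "nondegenerate N1 N2 u v"
    and "is_vertex N1 N2 u v y" and "is_vertex N1 N2 u v yF"
    and "ds < N2"
    and "S \<subseteq> C \<inter> F"
    and "UNO N1 N2 F C S"
    and "\<forall>e'\<in>S. plus_edge F ds e' \<longrightarrow> \<not> open_node N1 N2 F C S (Sup (fst e'))"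
    and "s < N1"
    and "SIN F ds C S s"
    and "e \<in> F" and "fst e = s"
    and "if (\<exists>e'\<in>F. fst e' = s \<and> minus_edge F ds e' \<and> e' \<notin> S)
         then minus_edge F ds e \<and> e \<notin> S
         else plus_edge F ds e"
  shows "S \<subseteq> succ_tree N1 N2 y e"
proof -
  have TC: "tree N1 N2 C" unfolding C_def using vertex_tree assms by blast
  have TF: "tree N1 N2 F" unfolding F_def using vertex_tree assms by blast
  have yT: "y \<in> TP N1 N2 u v" using assms unfolding is_vertex_def by blast
  have yFT: "yF \<in> TP N1 N2 u v" using assms unfolding is_vertex_def by blast
  obtain t where e: "e = (s,t)" using assms by (cases e) auto
  have eF: "(s,t) \<in> F" using assms e by simp
  have er: "s < N1" "t < N2" using eF unfolding F_def supp_def by auto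
  show ?thesis
  proof (cases "e \<in> supp N1 N2 y")
    case True
    then show ?thesis unfolding succ_tree_def using assms unfolding C_def by auto
  next
    case False
    have eC: "(s,t) \<notin> C" using False e unfolding C_def by simp
    define z where "z = pivot N1 N2 y e"
    have vy: "is_vertex N1 N2 u v y" using assms by blast
    have e1: "fst e < N1" "snd e < N2" using er e by auto
    have TC': "tree N1 N2 (supp N1 N2 y)" using TC unfolding C_def .
    note pp = pivot_props[OF vy TC' e1 False]
    have zn: "\<forall>i j. 0 \<le> z i j" using pp(1) unfolding z_def .
    have zr: "\<forall>i<N1. (\<Sum>j<N2. z i j) = u i" using pp(2) unfolding z_def .
    have zc: "\<forall>j<N2. (\<Sum>i<N1. z i j) = v j" using pp(3) unfolding z_def .
    have zs: "\<forall>i j. z i j \<noteq> 0 \<longrightarrow> (i,j) \<in> supp N1 N2 y \<union> {(s,t)}" using pp(4) e unfolding z_def by simp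
    have st: "succ_tree N1 N2 y e = supp N1 N2 z" unfolding succ_tree_def z_def using False by simp
    show ?thesis unfolding st
    proof
      fix g assume gS: "g \<in> S"
      obtain i0 j0 where g: "g = (i0,j0)" by (cases g)
      have gC: "(i0,j0) \<in> supp N1 N2 y" using gS g assms unfolding C_def by auto
      have gr: "i0 < N1" "j0 < N2" using gC unfolding supp_def by auto
      have "0 < z i0 j0"
      proof (rule ccontr)
        assume "\<not> 0 < z i0 j0"
        moreover have "0 \<le> z i0 j0" using zn by blast
        ultimately have z0: "z i0 j0 = 0" by simp
        have dC0: "dist (supp N1 N2 y) (Sup s) (Dem j0) = dist (supp N1 N2 y) (Sup s) (Sup i0) + 1"
          using step1[OF TC' yT zn zr zc zs gC z0 er(1)] .
        have vs: "valid_node N1 N2 (Sup s)" using er unfolding valid_node_def by simp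
        have "odd (edge_num C (Sup s) (i0,j0))"
          using edge_num_SupRoot[OF TC vs gC[folded C_def]] dC0 unfolding C_def by simp
        then have mw: "minus_edge F ds (i0,j0) \<and> wc_dem C S j0"
          using assms(16) gC gS g unfolding SIN_def C_def by force
        have zs': "\<forall>i j. z i j \<noteq> 0 \<longrightarrow> (i,j) \<in> C \<union> {(s,t)}" using zs unfolding C_def .
        have ifh: "if (\<exists>e'\<in>F. fst e' = s \<and> minus_edge F ds e' \<and> e' \<notin> S)
             then minus_edge F ds (s,t) \<and> (s,t) \<notin> S else plus_edge F ds (s,t)"
          using assms(19) unfolding e .
        have fS': "(i0,j0) \<in> S" using gS g by simp
        have SCF: "S \<subseteq> C \<inter> F" using assms(12) .
        have dsN: "ds < N2" using assms(11) .
        have h2: "\<forall>e'\<in>S. plus_edge F ds e' \<longrightarrow> \<not> open_node N1 N2 F C S (Sup (fst e'))" using assms(14) .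
        have sn: "SIN F ds C S s" using assms(16) .
        have dC0': "dist C (Sup s) (Dem j0) = dist C (Sup s) (Sup i0) + 1" using dC0 unfolding C_def .
        show False
          using step2[OF TC TF meta_eq_to_obj_eq[OF F_def] yFT zn zr zc zs' z0 fS' SCF eF eC dsN er(1) h2 sn ifh dC0'] mw
          by blast
      qed
      then show "g \<in> supp N1 N2 z" using g gr unfolding supp_def by simp
    qed
  qed
qed

end
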